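(* Let $(A\otimes V,\mu_{A\otimes V})$ be a weak crossed product with associated morphisms $\psi_V^A:V\otimes A\rightarrow A\otimes V$, $\sigma_V^A:V\otimes V\rightarrow A\otimes V$ and idempotent $\nabla_{A\otimes V}$. Let $\psi_A^V:A\otimes V\rightarrow V\otimes A$ satisfy $(V\otimes\mu_A)\circ(\psi_A^V\otimes A)\circ(A\otimes\psi_A^V)=\psi_A^V\circ(\mu_A\otimes V)$, and put $\nabla_{V\otimes A}=(V\otimes\mu_A)\circ((\psi_A^V\circ(\eta_A\otimes V))\otimes A)$. Suppose $\psi_V^A\circ\psi_A^V=\nabla_{A\otimes V}$ and $\psi_A^V\circ\psi_V^A=\nabla_{V\otimes A}$. Put $\sigma_A^V=\psi_A^V\circ\sigma_V^A:V\otimes V\rightarrow V\otimes A$ and $\mu_{V\otimes A}=(V\otimes\mu_A)\circ(\sigma_A^V\otimes\mu_A)\circ(V\otimes\psi_A^V\otimes A)$. Then $(V\otimes A,\mu_{V\otimes A})$ is a weak crossed product with associated morphisms $\psi_A^V,\sigma_A^V$, i.e. $\nabla_{V\otimes A}\circ\sigma_A^V=\sigma_A^V$, $(V\otimes\mu_A)\circ(\sigma_A^V\otimes A)\circ(V\otimes\psi_A^V)\circ(\psi_A^V\otimes V)=(V\otimes\mu_A)\circ(\psi_A^V\otimes A)\circ(A\otimes\sigma_A^V)$ (twisted condition), and $(V\otimes\mu_A)\circ(\sigma_A^V\otimes A)\circ(V\otimes\sigma_A^V)=(V\otimes\mu_A)\circ(\sigma_A^V\otimes A)\circ(V\otimes\psi_A^V)\circ(\sigma_A^V\otimes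 V)$ (cocycle condition); moreover $\mu_{V\otimes A}=\psi_A^V\circ\mu_{A\otimes V}\circ(\psi_V^A\otimes\psi_V^A)$. Furthermore, if $(A\otimes V,\mu_{A\otimes V})$ is a weak crossed product with preunit $\nu:K\rightarrow A\otimes V$, then $(V\otimes A,\mu_{V\otimes A})$ is a weak crossed product with preunit $\upsilon=\psi_A^V\circ\nu$, i.e., with $\beta_\upsilon=(V\otimes\mu_A)\circ(\upsilon\otimes A)$: $(V\otimes\mu_A)\circ(\sigma_A^V\otimes A)\circ(V\otimes\psi_A^V)\circ(\upsilon\otimes V)=\nabla_{V\otimes A}\circ(V\otimes\eta_A)$, $(V\otimes\mu_A)\circ(\sigma_A^V\otimes A)\circ(V\otimes\upsilon)=\nabla_{V\otimes A}\circ(V\otimes\eta_A)$, $(V\otimes\mu_A)\circ(\psi_A^V\otimes A)\circ(A\otimes\upsilon)=\beta_\upsilon$.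
   Context: $\mathcal C$ is a strict monoidal category with tensor product $\otimes$ and unit object $K$ in which every idempotent splits. We write $A\otimes f$ for $id_A\otimes f$. An algebra $A$ has unit $\eta_A$ and product $\mu_A$. Weak crossed products. Let $A$ be an algebra and $V$ an object, and let $\psi_V^A:V\otimes A\rightarrow A\otimes V$ satisfy $(\mu_A\otimes V)\circ(A\otimes\psi_V^A)\circ(\psi_V^A\otimes A)=\psi_V^A\circ(V\otimes\mu_A)$. Then $\nabla_{A\otimes V}=(\mu_A\otimes V)\circ(A\otimes\psi_V^A)\circ(A\otimes V\otimes\eta_A)$ is idempotent. Let $\sigma_V^A:V\otimes V\rightarrow A\otimes V$ with $\nabla_{A\otimes V}\circ\sigma_V^A=\sigma_V^A$. The twisted condition is $(\mu_A\otimes V)\circ(A\otimes\psi_V^A)\circ(\sigma_V^A\otimes A)=(\mu_A\otimes V)\circ(A\otimes\sigma_V^A)\circ(\psi_V^A\otimes V)\circ(V\otimes\psi_V^A)$ and the cocycle condition is $(\mu_A\otimes V)\circ(A\otimes\sigma_V^A)\circ(\sigma_V^A\otimes V)=(\mu_A\otimes V)\circ(A\otimes\sigma_V^A)\circ(\psi_V^A\otimes V)\circ(V\otimes\sigma_V^A)$. With $\mu_{A\otimes V}=(\mu_A\otimes V)\circ(\mu_A\otimes\sigma_V^A)\circ(A\otimes\psi_V^A\otimes V)$, if the twisted and cocycle conditions hold $(A\otimes V,\mu_{A\otimes V})$ is called a weak crossed product (with associated morphisms $\psi_V^A,\sigma_V^A$ and idempotent $\nabla_{A\otimes V}$). For $\nu:K\rightarrow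 A\otimes V$ let $\beta_\nu=(\mu_A\otimes V)\circ(A\otimes\nu)$; a weak crossed product with preunit $\nu$ is one with $(\mu_A\otimes V)\circ(A\otimes\sigma_V^A)\circ(\psi_V^A\otimes V)\circ(V\otimes\nu)=\nabla_{A\otimes V}\circ(\eta_A\otimes V)$, $(\mu_A\otimes V)\circ(A\otimes\sigma_V^A)\circ(\nu\otimes V)=\nabla_{A\otimes V}\circ(\eta_A\otimes V)$ and $(\mu_A\otimes V)\circ(A\otimes\psi_V^A)\circ(\nu\otimes A)=\beta_\nu$. *)

theory Defs
  imports Main
begin

text \<open>Cmp C g f is the composite "g after f"; TO / TM are the tensor product on
  objects / morphisms; Unit is the unit object K.\<close>

record ('o, 'm) smcat =
  Obj  :: "'o set"
  Hom  :: "'o \<Rightarrow> 'o \<Rightarrow> 'm set"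
  Cmp  :: "'m \<Rightarrow> 'm \<Rightarrow> 'm"
  Id   :: "'o \<Rightarrow> 'm"
  TO   :: "'o \<Rightarrow> 'o \<Rightarrow> 'o"
  TM   :: "'m \<Rightarrow> 'm \<Rightarrow> 'm"
  Unit :: "'o"

definition is_arr :: "('o, 'm) smcat \<Rightarrow> 'm \<Rightarrow> bool" where
  "is_arr C f \<longleftrightarrow> (\<exists>a b. f \<in> Hom C a b)"

definition strict_monoidal_category :: "('o, 'm) smcat \<Rightarrow> bool" where
  "strict_monoidal_category C \<longleftrightarrow>
     (\<forall>a b. (a \<notin> Obj C \<or> b \<notin> Obj C) \<longrightarrow> Hom C a b = {}) \<and>
     (\<forall>a b c f g. f \<in> Hom C a b \<and> g \<in> Hom C b c \<longrightarrow> Cmp C g f \<in> Hom C a c) \<and>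
     (\<forall>a \<in> Obj C. Id C a \<in> Hom C a a) \<and>
     (\<forall>a b f. f \<in> Hom C a b \<longrightarrow> Cmp C (Id C b) f = f \<and> Cmp C f (Id C a) = f) \<and>
     (\<forall>a b c d f g h. f \<in> Hom C a b \<and> g \<in> Hom C b c \<and> h \<in> Hom C c d \<longrightarrow>
        Cmp C h (Cmp C g f) = Cmp C (Cmp C h g) f) \<and>
     Unit C \<in> Obj C \<and>
     (\<forall>a \<in> Obj C. \<forall>b \<in> Obj C. TO C a b \<in> Obj C) \<and>
     (\<forall>a b c d f g. f \<in> Hom C a b \<and> g \<in> Hom C c d \<longrightarrow> TM C f g \<in> Hom C (TO C a c) (TO C b d)) \<and>
     (\<forall>a \<in> Obj C. \<forall>b \<in> Obj C. TM C (Id C a) (Id C b) = Id C (TO C a b)) \<and>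
     (\<forall>a b c a' b' c' f f' g g'. f \<in> Hom C a b \<and> f' \<in> Hom C b c \<and> g \<in> Hom C a' b' \<and> g' \<in> Hom C b' c' \<longrightarrow>
        TM C (Cmp C f' f) (Cmp C g' g) = Cmp C (TM C f' g') (TM C f g)) \<and>
     (\<forall>a \<in> Obj C. \<forall>b \<in> Obj C. \<forall>c \<in> Obj C. TO C (TO C a b) c = TO C a (TO C b c)) \<and>
     (\<forall>f g h. is_arr C f \<and> is_arr C g \<and> is_arr C h \<longrightarrow> TM C (TM C f g) h = TM C f (TM C g h)) \<and>
     (\<forall>a \<in> Obj C. TO C (Unit C) a = a \<and> TO C a (Unit C) = a) \<and>
     (\<forall>f. is_arr C f \<longrightarrow> TM C (Id C (Unit C)) f = f \<and> TM C f (Id C (Unit C)) = f)"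

definition idempotents_split :: "('o, 'm) smcat \<Rightarrow> bool" where
  "idempotents_split C \<longleftrightarrow>
     (\<forall>a e. e \<in> Hom C a a \<and> Cmp C e e = e \<longrightarrow>
        (\<exists>c p i. c \<in> Obj C \<and> p \<in> Hom C a c \<and> i \<in> Hom C c a \<and>
                 Cmp C p i = Id C c \<and> Cmp C i p = e))"

definition algebra :: "('o, 'm) smcat \<Rightarrow> 'o \<Rightarrow> 'm \<Rightarrow> 'm \<Rightarrow> bool" where
  "algebra C A eta mu \<longleftrightarrow>
     A \<in> Obj C \<and> eta \<in> Hom C (Unit C) A \<and> mu \<in> Hom C (TO C A A) A \<and>
     Cmp C mu (TM C mu (Id C A)) = Cmp C mu (TM C (Id C A) mu) \<and>
     Cmp C mu (TM C eta (Id C A)) = Id C A \<and>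
     Cmp C mu (TM C (Id C A) eta) = Id C A"

definition psi_compat :: "('o, 'm) smcat \<Rightarrow> 'o \<Rightarrow> 'o \<Rightarrow> 'm \<Rightarrow> 'm \<Rightarrow> bool" where
  "psi_compat C A V mu psi \<longleftrightarrow>
     Cmp C (TM C mu (Id C V)) (Cmp C (TM C (Id C A) psi) (TM C psi (Id C A)))
       = Cmp C psi (TM C (Id C V) mu)"

definition nablaAV :: "('o, 'm) smcat \<Rightarrow> 'o \<Rightarrow> 'o \<Rightarrow> 'm \<Rightarrow> 'm \<Rightarrow> 'm \<Rightarrow> 'm" where
  "nablaAV C A V eta mu psi =
     Cmp C (TM C mu (Id C V)) (Cmp C (TM C (Id C A) psi) (TM C (Id C (TO C A V)) eta))"

definition nablaVA :: "('o, 'm) smcat \<Rightarrow> 'o \<Rightarrow> 'o \<Rightarrow> 'm \<Rightarrow> 'm \<Rightarrow> 'm \<Rightarrow> 'm" where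
  "nablaVA C A V eta mu psi' =
     Cmp C (TM C (Id C V) mu) (TM C (Cmp C psi' (TM C eta (Id C V))) (Id C A))"

definition muAV :: "('o, 'm) smcat \<Rightarrow> 'o \<Rightarrow> 'o \<Rightarrow> 'm \<Rightarrow> 'm \<Rightarrow> 'm \<Rightarrow> 'm" where
  "muAV C A V mu psi sigma =
     Cmp C (TM C mu (Id C V)) (Cmp C (TM C mu sigma) (TM C (Id C A) (TM C psi (Id C V))))"

definition muVA :: "('o, 'm) smcat \<Rightarrow> 'o \<Rightarrow> 'o \<Rightarrow> 'm \<Rightarrow> 'm \<Rightarrow> 'm \<Rightarrow> 'm" where
  "muVA C A V mu psi' sigma' =
     Cmp C (TM C (Id C V) mu) (Cmp C (TM C sigma' mu) (TM C (Id C V) (TM C psi' (Id C A))))"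

definition twistedAV :: "('o, 'm) smcat \<Rightarrow> 'o \<Rightarrow> 'o \<Rightarrow> 'm \<Rightarrow> 'm \<Rightarrow> 'm \<Rightarrow> bool" where
  "twistedAV C A V mu psi sigma \<longleftrightarrow>
     Cmp C (TM C mu (Id C V)) (Cmp C (TM C (Id C A) psi) (TM C sigma (Id C A)))
     = Cmp C (TM C mu (Id C V)) (Cmp C (TM C (Id C A) sigma)
         (Cmp C (TM C psi (Id C V)) (TM C (Id C V) psi)))"

definition cocycleAV :: "('o, 'm) smcat \<Rightarrow> 'o \<Rightarrow> 'o \<Rightarrow> 'm \<Rightarrow> 'm \<Rightarrow> 'm \<Rightarrow> bool" where
  "cocycleAV C A V mu psi sigma \<longleftrightarrow>
     Cmp C (TM C mu (Id C V)) (Cmp C (TM C (Id C A) sigma) (TM C sigma (Id C V)))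
     = Cmp C (TM C mu (Id C V)) (Cmp C (TM C (Id C A) sigma)
         (Cmp C (TM C psi (Id C V)) (TM C (Id C V) sigma)))"

definition weak_crossed_product ::
  "('o, 'm) smcat \<Rightarrow> 'o \<Rightarrow> 'o \<Rightarrow> 'm \<Rightarrow> 'm \<Rightarrow> 'm \<Rightarrow> 'm \<Rightarrow> bool" where
  "weak_crossed_product C A V eta mu psi sigma \<longleftrightarrow>
     algebra C A eta mu \<and> V \<in> Obj C \<and>
     psi \<in> Hom C (TO C V A) (TO C A V) \<and>
     sigma \<in> Hom C (TO C V V) (TO C A V) \<and>
     psi_compat C A V mu psi \<and>
     Cmp C (nablaAV C A V eta mu psi) sigma = sigma \<and>
     twistedAV C A V mu psi sigma \<and>
     cocycleAV C A V mu psi sigma"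

definition betaAV :: "('o, 'm) smcat \<Rightarrow> 'o \<Rightarrow> 'o \<Rightarrow> 'm \<Rightarrow> 'm \<Rightarrow> 'm" where
  "betaAV C A V mu nu = Cmp C (TM C mu (Id C V)) (TM C (Id C A) nu)"

definition wcp_preunit ::
  "('o, 'm) smcat \<Rightarrow> 'o \<Rightarrow> 'o \<Rightarrow> 'm \<Rightarrow> 'm \<Rightarrow> 'm \<Rightarrow> 'm \<Rightarrow> 'm \<Rightarrow> bool" where
  "wcp_preunit C A V eta mu psi sigma nu \<longleftrightarrow>
     weak_crossed_product C A V eta mu psi sigma \<and>
     nu \<in> Hom C (Unit C) (TO C A V) \<and>
     Cmp C (TM C mu (Id C V)) (Cmp C (TM C (Id C A) sigma) (Cmp C (TM C psi (Id C V)) (TM C (Id C V) nu)))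
       = Cmp C (nablaAV C A V eta mu psi) (TM C eta (Id C V)) \<and>
     Cmp C (TM C mu (Id C V)) (Cmp C (TM C (Id C A) sigma) (TM C nu (Id C V)))
       = Cmp C (nablaAV C A V eta mu psi) (TM C eta (Id C V)) \<and>
     Cmp C (TM C mu (Id C V)) (Cmp C (TM C (Id C A) psi) (TM C nu (Id C A)))
       = betaAV C A V mu nu"

end

theory Submission
  imports Defs
begin


type_synonym ('o,'m) layer = "'o list \<times> 'm \<times> 'o list \<times> 'o list \<times> 'o list"

fun obl :: "('o,'m) smcat \<Rightarrow> 'o list \<Rightarrow> 'o" where
  "obl C [] = Unit C"
| "obl C [x] = x"
| "obl C (x#y#r) = TO C x (obl C (y#r))"

definition lay :: "('o,'m) smcat \<Rightarrow> 'o list \<Rightarrow> 'm \<Rightarrow> 'o list \<Rightarrow> 'm" where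
  "lay C l f r = TM C (TM C (Id C (obl C l)) f) (Id C (obl C r))"

fun evl :: "('o,'m) smcat \<Rightarrow> ('o,'m) layer \<Rightarrow> 'm" where
  "evl C (l,f,a,b,r) = lay C l f r"

definition cmps :: "('o,'m) smcat \<Rightarrow> ('o,'m) layer list \<Rightarrow> 'm" where
  "cmps C Ls = foldl (\<lambda>acc L. Cmp C (evl C L) acc) (evl C (hd Ls)) (tl Ls)"

fun ldom :: "('o,'m) layer \<Rightarrow> 'o list" where "ldom (l,f,a,b,r) = l@a@r"
fun lcod :: "('o,'m) layer \<Rightarrow> 'o list" where "lcod (l,f,a,b,r) = l@b@r"
fun lok :: "('o,'m) smcat \<Rightarrow> ('o,'m) layer \<Rightarrow> bool" where
  "lok C (l,f,a,b,r) = (f \<in> Hom C (obl C a) (obl C b) \<and> set l \<subseteq> Obj C \<and> set a \<subseteq> Obj C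
      \<and> set b \<subseteq> Obj C \<and> set r \<subseteq> Obj C)"

fun wf :: "('o,'m) smcat \<Rightarrow> ('o,'m) layer list \<Rightarrow> bool" where
  "wf C [] = False"
| "wf C [L] = lok C L"
| "wf C (L1#L2#Ls) = (lok C L1 \<and> lcod L1 = ldom L2 \<and> wf C (L2#Ls))"

fun wh :: "'o list \<Rightarrow> 'o list \<Rightarrow> ('o,'m) layer \<Rightarrow> ('o,'m) layer" where
  "wh p s (l,f,a,b,r) = (p@l,f,a,b,r@s)"

fun swc :: "('o,'m) layer \<Rightarrow> ('o,'m) layer \<Rightarrow> bool" where
  "swc (l1,f,a,b,r1) (l2,g,c,d,r2) = (length l1 + length b \<le> length l2 \<or> length l2 + length c \<le> length l1)"

fun swp :: "('o,'m) layer \<Rightarrow> ('o,'m) layer \<Rightarrow> ('o,'m) layer list" where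
  "swp (l1,f,a,b,r1) (l2,g,c,d,r2) = (if length l1 + length b \<le> length l2 then
      [(l1 @ a @ drop (length l1 + length b) l2, g, c, d, r2), (l1, f, a, b, drop (length l1 + length b) l2 @ d @ r2)]
     else [(l2, g, c, d, drop (length l2 + length c) l1 @ a @ r1), (l2 @ d @ drop (length l2 + length c) l1, f, a, b, r1)])"

locale SMC = fixes C :: "('o,'m) smcat" assumes smc: "strict_monoidal_category C"
begin

lemma hom_obj: "f \<in> Hom C a b \<Longrightarrow> a \<in> Obj C \<and> b \<in> Obj C"
  using smc[unfolded strict_monoidal_category_def, THEN conjunct1] by (metis empty_iff)
lemma comp_hom: "f \<in> Hom C a b \<Longrightarrow> g \<in> Hom C b c \<Longrightarrow> Cmp C g f \<in> Hom C a c"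
  using smc[unfolded strict_monoidal_category_def, THEN conjunct2, THEN conjunct1] by blast
lemma id_hom: "a \<in> Obj C \<Longrightarrow> Id C a \<in> Hom C a a"
  using smc[unfolded strict_monoidal_category_def, THEN conjunct2, THEN conjunct2, THEN conjunct1] by blast
lemma id_l: "f \<in> Hom C a b \<Longrightarrow> Cmp C (Id C b) f = f"
  using smc[unfolded strict_monoidal_category_def, THEN conjunct2, THEN conjunct2, THEN conjunct2, THEN conjunct1] by blast
lemma id_r: "f \<in> Hom C a b \<Longrightarrow> Cmp C f (Id C a) = f"
  using smc[unfolded strict_monoidal_category_def, THEN conjunct2, THEN conjunct2, THEN conjunct2, THEN conjunct1] by blast
lemma cassoc: "f \<in> Hom C a b \<Longrightarrow> g \<in> Hom C b c \<Longrightarrow> h \<in> Hom C c d \<Longrightarrow>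
   Cmp C h (Cmp C g f) = Cmp C (Cmp C h g) f"
  using smc[unfolded strict_monoidal_category_def, THEN conjunct2, THEN conjunct2, THEN conjunct2, THEN conjunct2, THEN conjunct1] by blast
lemma unit_obj: "Unit C \<in> Obj C"
  using smc[unfolded strict_monoidal_category_def, THEN conjunct2, THEN conjunct2, THEN conjunct2, THEN conjunct2, THEN conjunct2, THEN conjunct1] by blast
lemma TO_obj: "a \<in> Obj C \<Longrightarrow> b \<in> Obj C \<Longrightarrow> TO C a b \<in> Obj C"
  using smc[unfolded strict_monoidal_category_def, THEN conjunct2, THEN conjunct2, THEN conjunct2, THEN conjunct2, THEN conjunct2, THEN conjunct2, THEN conjunct1] by blast
lemma TM_hom: "f \<in> Hom C a b \<Longrightarrow> g \<in> Hom C c d \<Longrightarrow> TM C f g \<in> Hom C (TO C a c) (TO C b d)"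
  using smc[unfolded strict_monoidal_category_def, THEN conjunct2, THEN conjunct2, THEN conjunct2, THEN conjunct2, THEN conjunct2, THEN conjunct2, THEN conjunct2, THEN conjunct1] by blast
lemma TM_id: "a \<in> Obj C \<Longrightarrow> b \<in> Obj C \<Longrightarrow> TM C (Id C a) (Id C b) = Id C (TO C a b)"
  using smc[unfolded strict_monoidal_category_def, THEN conjunct2, THEN conjunct2, THEN conjunct2, THEN conjunct2, THEN conjunct2, THEN conjunct2, THEN conjunct2, THEN conjunct2, THEN conjunct1] by blast
lemma interch: "f \<in> Hom C a b \<Longrightarrow> f' \<in> Hom C b c \<Longrightarrow> g \<in> Hom C a' b' \<Longrightarrow> g' \<in> Hom C b' c' \<Longrightarrow>
        TM C (Cmp C f' f) (Cmp C g' g) = Cmp C (TM C f' g') (TM C f g)"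
  using smc[unfolded strict_monoidal_category_def, THEN conjunct2, THEN conjunct2, THEN conjunct2, THEN conjunct2, THEN conjunct2, THEN conjunct2, THEN conjunct2, THEN conjunct2, THEN conjunct2, THEN conjunct1] by blast
lemma TO_assoc: "a \<in> Obj C \<Longrightarrow> b \<in> Obj C \<Longrightarrow> c \<in> Obj C \<Longrightarrow> TO C (TO C a b) c = TO C a (TO C b c)"
  using smc[unfolded strict_monoidal_category_def, THEN conjunct2, THEN conjunct2, THEN conjunct2, THEN conjunct2, THEN conjunct2, THEN conjunct2, THEN conjunct2, THEN conjunct2, THEN conjunct2, THEN conjunct2, THEN conjunct1] by blast
lemma TM_assoc: "is_arr C f \<Longrightarrow> is_arr C g \<Longrightarrow> is_arr C h \<Longrightarrow> TM C (TM C f g) h = TM C f (TM C g h)"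
  using smc[unfolded strict_monoidal_category_def, THEN conjunct2, THEN conjunct2, THEN conjunct2, THEN conjunct2, THEN conjunct2, THEN conjunct2, THEN conjunct2, THEN conjunct2, THEN conjunct2, THEN conjunct2, THEN conjunct2, THEN conjunct1] by blast
lemma TO_unitL: "a \<in> Obj C \<Longrightarrow> TO C (Unit C) a = a"
  using smc[unfolded strict_monoidal_category_def, THEN conjunct2, THEN conjunct2, THEN conjunct2, THEN conjunct2, THEN conjunct2, THEN conjunct2, THEN conjunct2, THEN conjunct2, THEN conjunct2, THEN conjunct2, THEN conjunct2, THEN conjunct2, THEN conjunct1] by blast
lemma TO_unitR: "a \<in> Obj C \<Longrightarrow> TO C a (Unit C) = a"
  using smc[unfolded strict_monoidal_category_def, THEN conjunct2, THEN conjunct2, THEN conjunct2, THEN conjunct2, THEN conjunct2, THEN conjunct2, THEN conjunct2, THEN conjunct2, THEN conjunct2, THEN conjunct2, THEN conjunct2, THEN conjunct2, THEN conjunct1] by blast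
lemma TM_unitL: "is_arr C f \<Longrightarrow> TM C (Id C (Unit C)) f = f"
  using smc[unfolded strict_monoidal_category_def, THEN conjunct2, THEN conjunct2, THEN conjunct2, THEN conjunct2, THEN conjunct2, THEN conjunct2, THEN conjunct2, THEN conjunct2, THEN conjunct2, THEN conjunct2, THEN conjunct2, THEN conjunct2, THEN conjunct2] by blast
lemma TM_unitR: "is_arr C f \<Longrightarrow> TM C f (Id C (Unit C)) = f"
  using smc[unfolded strict_monoidal_category_def, THEN conjunct2, THEN conjunct2, THEN conjunct2, THEN conjunct2, THEN conjunct2, THEN conjunct2, THEN conjunct2, THEN conjunct2, THEN conjunct2, THEN conjunct2, THEN conjunct2, THEN conjunct2, THEN conjunct2] by blast

lemma is_arrI: "f \<in> Hom C a b \<Longrightarrow> is_arr C f"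
  unfolding is_arr_def by blast
lemma is_arr_Id: "a \<in> Obj C \<Longrightarrow> is_arr C (Id C a)"
  by (rule is_arrI[OF id_hom])
lemma is_arr_TM: "is_arr C f \<Longrightarrow> is_arr C g \<Longrightarrow> is_arr C (TM C f g)"
  unfolding is_arr_def by (blast intro: TM_hom)

lemma obl_Cons: "x \<in> Obj C \<Longrightarrow> obl C (x#zs) = TO C x (obl C zs)"
  by (cases zs) (auto simp: TO_unitR)

lemma obl_Obj: "set xs \<subseteq> Obj C \<Longrightarrow> obl C xs \<in> Obj C"
  by (induction xs) (auto simp: unit_obj TO_obj obl_Cons)

lemma obl_app: "set xs \<subseteq> Obj C \<Longrightarrow> set ys \<subseteq> Obj C \<Longrightarrow> obl C (xs@ys) = TO C (obl C xs) (obl C ys)"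
proof (induction xs)
  case Nil thus ?case by (simp add: TO_unitL obl_Obj)
next
  case (Cons x xs)
  thus ?case by (simp add: obl_Cons TO_assoc obl_Obj)
qed

lemma Id_obl_app: "set xs \<subseteq> Obj C \<Longrightarrow> set ys \<subseteq> Obj C \<Longrightarrow>
   Id C (obl C (xs@ys)) = TM C (Id C (obl C xs)) (Id C (obl C ys))"
  by (simp add: obl_app TM_id obl_Obj)

lemma lay_hom: "f \<in> Hom C (obl C a) (obl C b) \<Longrightarrow> set l \<subseteq> Obj C \<Longrightarrow> set a \<subseteq> Obj C \<Longrightarrow>
   set b \<subseteq> Obj C \<Longrightarrow> set r \<subseteq> Obj C \<Longrightarrow> lay C l f r \<in> Hom C (obl C (l@a@r)) (obl C (l@b@r))"
  unfolding lay_def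
  apply (simp add: obl_app TO_assoc[symmetric] obl_Obj)
  apply (intro TM_hom id_hom obl_Obj; simp)
  done

lemma evl_hom: "lok C L \<Longrightarrow> evl C L \<in> Hom C (obl C (ldom L)) (obl C (lcod L))"
  by (cases L) (auto intro: lay_hom)

lemma wf_Cons: "wf C (L#Ls) = (lok C L \<and> (Ls \<noteq> [] \<longrightarrow> lcod L = ldom (hd Ls) \<and> wf C Ls))"
  by (cases Ls) auto

lemma wf_app: "Ls \<noteq> [] \<Longrightarrow> Ms \<noteq> [] \<Longrightarrow>
   wf C (Ls@Ms) = (wf C Ls \<and> wf C Ms \<and> lcod (last Ls) = ldom (hd Ms))"
proof (induction Ls)
  case Nil thus ?case by simp
next
  case (Cons L Ls)
  show ?case
  proof (cases "Ls = []")
    case True thus ?thesis using Cons.prems by (auto simp add: wf_Cons)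
  next
    case False thus ?thesis using Cons by (simp add: wf_Cons)
  qed
qed

lemma cmps_single[simp]: "cmps C [L] = evl C L"
  by (simp add: cmps_def)

lemma cmps_snoc: "Ls \<noteq> [] \<Longrightarrow> cmps C (Ls@[L]) = Cmp C (evl C L) (cmps C Ls)"
  by (cases Ls) (simp_all add: cmps_def)

lemma cmps_hom: "wf C Ls \<Longrightarrow> cmps C Ls \<in> Hom C (obl C (ldom (hd Ls))) (obl C (lcod (last Ls)))"
proof (induction Ls rule: rev_induct)
  case Nil thus ?case by simp
next
  case (snoc L Ls)
  show ?case
  proof (cases "Ls = []")
    case True thus ?thesis using snoc by (simp add: evl_hom)
  next
    case False
    have w: "wf C Ls" "wf C [L]" "lcod (last Ls) = ldom L" using snoc.prems wf_app[OF False, of "[L]"] by auto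
    have h1: "cmps C Ls \<in> Hom C (obl C (ldom (hd Ls))) (obl C (lcod (last Ls)))" using snoc.IH[OF w(1)] .
    have h2: "evl C L \<in> Hom C (obl C (ldom L)) (obl C (lcod L))" using evl_hom w(2) by simp
    show ?thesis using comp_hom[OF h1 h2[folded w(3)]] False by (simp add: cmps_snoc)
  qed
qed

lemma cmps_app: "wf C (Ls@Ms) \<Longrightarrow> Ls \<noteq> [] \<Longrightarrow> Ms \<noteq> [] \<Longrightarrow> cmps C (Ls@Ms) = Cmp C (cmps C Ms) (cmps C Ls)"
proof (induction Ms rule: rev_induct)
  case Nil thus ?case by simp
next
  case (snoc M Ms)
  show ?case
  proof (cases "Ms = []")
    case True thus ?thesis using snoc by (simp add: cmps_snoc)
  next
    case False
    have w: "wf C (Ls@Ms)" "wf C [M]" "lcod (last (Ls@Ms)) = ldom M"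
      using snoc.prems(1,2) wf_app[of "Ls@Ms" "[M]"] by auto
    have w2: "wf C Ls" "wf C Ms" "lcod (last Ls) = ldom (hd Ms)" using w(1) wf_app[OF snoc.prems(2) False] by auto
    have e: "cmps C (Ls@Ms@[M]) = Cmp C (evl C M) (Cmp C (cmps C Ms) (cmps C Ls))"
      using cmps_snoc[of "Ls@Ms" M] snoc.IH[OF w(1) snoc.prems(2) False] snoc.prems by simp
    have h: "Cmp C (evl C M) (Cmp C (cmps C Ms) (cmps C Ls)) = Cmp C (Cmp C (evl C M) (cmps C Ms)) (cmps C Ls)"
      apply (rule cassoc[OF cmps_hom[OF w2(1)] _ evl_hom])
      using cmps_hom[OF w2(2)] w2(3) w(2) w(3) False by simp_all
    show ?thesis using e h False by (simp add: cmps_snoc)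
  qed
qed

lemma replace:
  assumes e: "cmps C X = cmps C Y" and w1: "wf C (P@X@Q)" and w2: "wf C (P@Y@Q)"
    and ne: "X \<noteq> []" "Y \<noteq> []"
  shows "cmps C (P@X@Q) = cmps C (P@Y@Q)"
proof (cases "P = []")
  case True
  show ?thesis
  proof (cases "Q = []")
    case True thus ?thesis using \<open>P=[]\<close> e by simp
  next
    case False thus ?thesis using \<open>P=[]\<close> e w1 w2 ne by (simp add: cmps_app)
  qed
next
  case False
  have a1: "cmps C (P@(X@Q)) = Cmp C (cmps C (X@Q)) (cmps C P)" using cmps_app[OF w1 False] ne by simp
  have a2: "cmps C (P@(Y@Q)) = Cmp C (cmps C (Y@Q)) (cmps C P)" using cmps_app[OF w2 False] ne by simp
  have w1': "wf C (X@Q)" using w1 wf_app[OF False, of "X@Q"] ne by simp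
  have w2': "wf C (Y@Q)" using w2 wf_app[OF False, of "Y@Q"] ne by simp
  have "cmps C (X@Q) = cmps C (Y@Q)"
    by (cases "Q = []") (simp_all add: e cmps_app[OF w1' ne(1)] cmps_app[OF w2' ne(2)])
  thus ?thesis using a1 a2 by simp
qed


lemma TM_assoc_s: "is_arr C f \<Longrightarrow> is_arr C g \<Longrightarrow> is_arr C h \<Longrightarrow> TM C (TM C f g) h = TM C f (TM C g h)"
  by (rule TM_assoc)

lemma wf_mid: "wf C (P@X@Q) \<Longrightarrow> X \<noteq> [] \<Longrightarrow> wf C X"
proof -
  assume w: "wf C (P@X@Q)" and ne: "X \<noteq> []"
  have w1: "wf C (X@Q)" using w ne wf_app[of P "X@Q"] by (cases "P = []") auto
  show "wf C X" using w1 ne wf_app[of X Q] by (cases "Q = []") auto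
qed

lemma is_arr_obl: "set xs \<subseteq> Obj C \<Longrightarrow> is_arr C (Id C (obl C xs))"
  by (simp add: is_arr_Id obl_Obj)

lemma whisk_comp: "X \<in> Hom C a b \<Longrightarrow> Y \<in> Hom C b c \<Longrightarrow> p \<in> Obj C \<Longrightarrow> s \<in> Obj C \<Longrightarrow>
  Cmp C (TM C (Id C p) (TM C Y (Id C s))) (TM C (Id C p) (TM C X (Id C s))) = TM C (Id C p) (TM C (Cmp C Y X) (Id C s))"
proof -
  assume h: "X \<in> Hom C a b" "Y \<in> Hom C b c" "p \<in> Obj C" "s \<in> Obj C"
  have 1: "TM C (Cmp C Y X) (Cmp C (Id C s) (Id C s)) = Cmp C (TM C Y (Id C s)) (TM C X (Id C s))"
    by (rule interch[OF h(1) h(2) id_hom[OF h(4)] id_hom[OF h(4)]])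
  have 2: "TM C (Cmp C (Id C p) (Id C p)) (Cmp C (TM C Y (Id C s)) (TM C X (Id C s)))
     = Cmp C (TM C (Id C p) (TM C Y (Id C s))) (TM C (Id C p) (TM C X (Id C s)))"
    by (rule interch[OF id_hom[OF h(3)] id_hom[OF h(3)] TM_hom[OF h(1) id_hom[OF h(4)]] TM_hom[OF h(2) id_hom[OF h(4)]]])
  show ?thesis using 1 2 id_l[OF id_hom[OF h(3)]] id_l[OF id_hom[OF h(4)]] by simp
qed

lemma whisk_comp2: "X \<in> Hom C a b \<Longrightarrow> Y \<in> Hom C b c \<Longrightarrow> p \<in> Obj C \<Longrightarrow> s \<in> Obj C \<Longrightarrow>
  Cmp C (TM C (TM C (Id C p) Y) (Id C s)) (TM C (TM C (Id C p) X) (Id C s)) = TM C (TM C (Id C p) (Cmp C Y X)) (Id C s)"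
proof -
  assume h: "X \<in> Hom C a b" "Y \<in> Hom C b c" "p \<in> Obj C" "s \<in> Obj C"
  have 1: "TM C (Cmp C (Id C p) (Id C p)) (Cmp C Y X) = Cmp C (TM C (Id C p) Y) (TM C (Id C p) X)"
    by (rule interch[OF id_hom[OF h(3)] id_hom[OF h(3)] h(1) h(2)])
  have 2: "TM C (Cmp C (TM C (Id C p) Y) (TM C (Id C p) X)) (Cmp C (Id C s) (Id C s))
     = Cmp C (TM C (TM C (Id C p) Y) (Id C s)) (TM C (TM C (Id C p) X) (Id C s))"
    by (rule interch[OF TM_hom[OF id_hom[OF h(3)] h(1)] TM_hom[OF id_hom[OF h(3)] h(2)] id_hom[OF h(4)] id_hom[OF h(4)]])
  show ?thesis using 1 2 id_l[OF id_hom[OF h(3)]] id_l[OF id_hom[OF h(4)]] by simp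
qed

lemma lay_comp: "f \<in> Hom C (obl C a) (obl C b) \<Longrightarrow> g \<in> Hom C (obl C b) (obl C c) \<Longrightarrow>
   set l \<subseteq> Obj C \<Longrightarrow> set r \<subseteq> Obj C \<Longrightarrow>
   lay C l (Cmp C g f) r = Cmp C (lay C l g r) (lay C l f r)"
  unfolding lay_def by (rule whisk_comp2[symmetric]) (simp_all add: obl_Obj)

lemma wh_evl: "lok C L \<Longrightarrow> set p \<subseteq> Obj C \<Longrightarrow> set s \<subseteq> Obj C \<Longrightarrow>
   evl C (wh p s L) = TM C (Id C (obl C p)) (TM C (evl C L) (Id C (obl C s)))"
  apply (cases L)
  apply (clarsimp simp: lay_def Id_obl_app)
  apply (subgoal_tac "is_arr C (fst (snd L))")
   apply (simp add: TM_assoc_s is_arr_obl is_arr_TM)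
  apply (auto intro: is_arrI)
  done

lemma wh_cmps: "wf C X \<Longrightarrow> set p \<subseteq> Obj C \<Longrightarrow> set s \<subseteq> Obj C \<Longrightarrow>
   cmps C (map (wh p s) X) = TM C (Id C (obl C p)) (TM C (cmps C X) (Id C (obl C s)))"
proof (induction X rule: rev_induct)
  case Nil thus ?case by simp
next
  case (snoc L X)
  show ?case
  proof (cases "X = []")
    case True thus ?thesis using snoc by (simp add: wh_evl)
  next
    case False
    have w: "wf C X" "wf C [L]" "lcod (last X) = ldom L" using snoc.prems wf_app[OF False, of "[L]"] by auto
    have h1: "cmps C X \<in> Hom C (obl C (ldom (hd X))) (obl C (lcod (last X)))" by (rule cmps_hom[OF w(1)])
    have h2: "evl C L \<in> Hom C (obl C (lcod (last X))) (obl C (lcod L))" using evl_hom w(2) w(3) by simp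
    have "cmps C (map (wh p s) (X@[L])) = Cmp C (evl C (wh p s L)) (cmps C (map (wh p s) X))"
      using cmps_snoc[of "map (wh p s) X"] False by simp
    also have "\<dots> = TM C (Id C (obl C p)) (TM C (Cmp C (evl C L) (cmps C X)) (Id C (obl C s)))"
      using snoc.IH[OF w(1) snoc.prems(2,3)] wh_evl[of L p s] w(2) snoc.prems
      by (simp add: whisk_comp[OF h1 h2] obl_Obj)
    finally show ?thesis using False by (simp add: cmps_snoc)
  qed
qed

lemma interch_id1: "X \<in> Hom C a b \<Longrightarrow> Y \<in> Hom C c d \<Longrightarrow> Cmp C (TM C (Id C b) Y) (TM C X (Id C c)) = TM C X Y"
proof -
  assume h: "X \<in> Hom C a b" "Y \<in> Hom C c d"
  have o: "b \<in> Obj C" "c \<in> Obj C" using hom_obj h by auto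
  show ?thesis using interch[OF h(1) id_hom[OF o(1)] id_hom[OF o(2)] h(2)] id_l[OF h(1)] id_r[OF h(2)] by simp
qed

lemma interch_id2: "X \<in> Hom C a b \<Longrightarrow> Y \<in> Hom C c d \<Longrightarrow> Cmp C (TM C X (Id C d)) (TM C (Id C a) Y) = TM C X Y"
proof -
  assume h: "X \<in> Hom C a b" "Y \<in> Hom C c d"
  have o: "a \<in> Obj C" "d \<in> Obj C" using hom_obj h by auto
  show ?thesis using interch[OF id_hom[OF o(1)] h(1) h(2) id_hom[OF o(2)]] id_r[OF h(1)] id_l[OF h(2)] by simp
qed

lemma lay_prefix: "set p \<subseteq> Obj C \<Longrightarrow> set q \<subseteq> Obj C \<Longrightarrow> set r \<subseteq> Obj C \<Longrightarrow> is_arr C g \<Longrightarrow>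
   lay C (p@q) g r = TM C (Id C (obl C p)) (lay C q g r)"
  unfolding lay_def by (simp add: Id_obl_app TM_assoc_s is_arr_obl is_arr_TM)

lemma xch:
  assumes l1: "lok C (l,f,a,b,m@c@r)" and l2: "lok C (l@b@m,g,c,d,r)"
  shows "cmps C [(l,f,a,b,m@c@r),(l@b@m,g,c,d,r)] = cmps C [(l@a@m,g,c,d,r),(l,f,a,b,m@d@r)]"
proof -
  have o: "set l \<subseteq> Obj C" "set a \<subseteq> Obj C" "set b \<subseteq> Obj C" "set m \<subseteq> Obj C" "set c \<subseteq> Obj C"
     "set d \<subseteq> Obj C" "set r \<subseteq> Obj C" "f \<in> Hom C (obl C a) (obl C b)" "g \<in> Hom C (obl C c) (obl C d)"
    using l1 l2 by auto
  define F where "F = TM C (Id C (obl C l)) f"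
  define G where "G = lay C m g r"
  have F: "F \<in> Hom C (obl C (l@a)) (obl C (l@b))"
    unfolding F_def using o by (simp add: obl_app TM_hom id_hom obl_Obj)
  have G: "G \<in> Hom C (obl C (m@c@r)) (obl C (m@d@r))" unfolding G_def using o by (simp add: lay_hom)
  have ga: "is_arr C g" using o(9) by (rule is_arrI)
  have e1: "lay C l f (m@c@r) = TM C F (Id C (obl C (m@c@r)))" unfolding F_def lay_def ..
  have e2: "lay C l f (m@d@r) = TM C F (Id C (obl C (m@d@r)))" unfolding F_def lay_def ..
  have e3: "lay C (l@b@m) g r = TM C (Id C (obl C (l@b))) G"
    using lay_prefix[of "l@b" m r g] o ga unfolding G_def by simp
  have e4: "lay C (l@a@m) g r = TM C (Id C (obl C (l@a))) G"
    using lay_prefix[of "l@a" m r g] o ga unfolding G_def by simp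
  show ?thesis
    by (simp add: cmps_def e1 e2 e3 e4 interch_id1[OF F G] interch_id2[OF F G])
qed

lemma swp_ok:
  assumes w: "wf C [L1,L2]" and c: "swc L1 L2"
  shows "cmps C [L1,L2] = cmps C (swp L1 L2)"
proof -
  obtain l1 f a b r1 where L1: "L1 = (l1,f,a,b,r1)" by (cases L1) auto
  obtain l2 g c d r2 where L2: "L2 = (l2,g,c,d,r2)" by (cases L2) auto
  have ok1: "lok C L1" and ok2: "lok C L2" and eq: "l1@b@r1 = l2@c@r2" using w L1 L2 by auto
  show ?thesis
  proof (cases "length l1 + length b \<le> length l2")
    case True
    define k where "k = length l1 + length b"
    define m where "m = drop k l2"
    have "take k (l1@b@r1) = take k (l2@c@r2)" using eq by simp
    hence t: "l1@b = take k l2" using True unfolding k_def by simp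
    have l2e: "l2 = l1@b@m" using t unfolding m_def by (metis append_assoc append_take_drop_id)
    have "drop k (l1@b@r1) = drop k (l2@c@r2)" using eq by simp
    hence r1e: "r1 = m@c@r2" using True unfolding k_def m_def by simp
    have "cmps C [(l1,f,a,b,m@c@r2),(l1@b@m,g,c,d,r2)] = cmps C [(l1@a@m,g,c,d,r2),(l1,f,a,b,m@d@r2)]"
      by (rule xch) (use ok1 ok2 L1 L2 l2e r1e in simp_all)
    thus ?thesis using L1 L2 l2e r1e True unfolding m_def k_def by simp
  next
    case False
    hence c2: "length l2 + length c \<le> length l1" using c L1 L2 by simp
    define k where "k = length l2 + length c"
    define m where "m = drop k l1"
    have "take k (l1@b@r1) = take k (l2@c@r2)" using eq by simp
    hence t: "l2@c = take k l1" using c2 unfolding k_def by simp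
    have l1e: "l1 = l2@c@m" using t unfolding m_def by (metis append_assoc append_take_drop_id)
    have "drop k (l1@b@r1) = drop k (l2@c@r2)" using eq by simp
    hence r2e: "r2 = m@b@r1" using c2 unfolding k_def m_def by simp
    have "cmps C [(l2,g,c,d,m@a@r1),(l2@d@m,f,a,b,r1)] = cmps C [(l2@c@m,f,a,b,r1),(l2,g,c,d,m@b@r1)]"
      by (rule xch) (use ok1 ok2 L1 L2 l1e r2e in simp_all)
    thus ?thesis using L1 L2 l1e r2e False c2 unfolding m_def k_def by simp
  qed
qed

lemma split3: "Suc i < length L \<Longrightarrow> L = take i L @ [L!i, L!Suc i] @ drop (Suc (Suc i)) L"
  by (metis Cons_nth_drop_Suc Suc_lessD append_Cons append_Nil append_take_drop_id)

lemma swi: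
  assumes w: "wf C L1" and i: "Suc i < length L1" and c: "swc (L1!i) (L1!Suc i)"
    and e: "L2 = take i L1 @ swp (L1!i) (L1!Suc i) @ drop (Suc (Suc i)) L1" and w2: "wf C L2"
  shows "cmps C L1 = cmps C L2"
proof -
  have s: "L1 = take i L1 @ [L1!i, L1!Suc i] @ drop (Suc (Suc i)) L1" by (rule split3[OF i])
  have wx: "wf C [L1!i, L1!Suc i]" using wf_mid[of _ "[L1!i, L1!Suc i]"] w s by (metis list.distinct(1))
  have ne: "swp (L1!i) (L1!Suc i) \<noteq> []" by (cases "L1!i"; cases "L1!Suc i") auto
  have "cmps C (take i L1 @ [L1!i, L1!Suc i] @ drop (Suc (Suc i)) L1) = cmps C L2"
    unfolding e by (rule replace[OF swp_ok[OF wx c]]) (use w s w2 e ne in simp_all)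
  thus ?thesis using s by simp
qed

lemma rwi:
  assumes eq: "cmps C X = cmps C Y" and wX: "wf C X" and wY: "wf C Y" and ne: "X \<noteq> []" "Y \<noteq> []"
    and ps: "set p \<subseteq> Obj C" "set s \<subseteq> Obj C"
    and t: "take (length X) (drop i L1) = map (wh p s) X"
    and e: "L2 = take i L1 @ map (wh p s) Y @ drop (i + length X) L1"
    and w1: "wf C L1" and w2: "wf C L2"
  shows "cmps C L1 = cmps C L2"
proof -
  have s: "L1 = take i L1 @ map (wh p s) X @ drop (i + length X) L1"
    using t by (metis append_take_drop_id drop_drop add.commute)
  have "cmps C (take i L1 @ map (wh p s) X @ drop (i + length X) L1) = cmps C L2"
    unfolding e
    by (rule replace) (use w1 s w2 e ne eq wh_cmps[OF wX ps] wh_cmps[OF wY ps] in simp_all)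
  thus ?thesis using s by simp
qed

lemma rmI:
  assumes w: "wf C L1" and i: "i < length L1" and z: "L1!i = (l, Id C (Unit C), [], [], r)"
    and e: "L2 = take i L1 @ drop (Suc i) L1" and ne: "L2 \<noteq> []"
  shows "cmps C L1 = cmps C L2"
proof -
  define P where "P = take i L1"
  define Q where "Q = drop (Suc i) L1"
  define Z where "Z = L1!i"
  have s: "L1 = P@[Z]@Q" unfolding P_def Q_def Z_def using i
    by (metis Cons_nth_drop_Suc append_Cons append_Nil append_take_drop_id)
  have okZ: "lok C Z" using wf_mid[of P "[Z]" Q] w s by simp
  have o: "set l \<subseteq> Obj C" "set r \<subseteq> Obj C" using okZ z unfolding Z_def by auto
  have ez: "evl C Z = Id C (obl C (l@r))" unfolding Z_def z
    using o by (simp add: lay_def TM_unitR is_arr_obl Id_obl_app)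
  show ?thesis
  proof (cases "P = []")
    case True
    hence Q: "Q \<noteq> []" using ne e unfolding P_def Q_def by simp
    have wq: "wf C ([Z]@Q)" using w s True by simp
    have wq2: "wf C Q" "lcod Z = ldom (hd Q)" using wf_app[of "[Z]" Q] wq Q by auto
    have "cmps C ([Z]@Q) = Cmp C (cmps C Q) (evl C Z)" using cmps_app[OF wq] Q by simp
    also have "\<dots> = cmps C Q" unfolding ez using cmps_hom[OF wq2(1)] wq2(2) z Z_def
      by (metis id_r lcod.simps append.left_neutral append_Nil)
    moreover have "L2 = Q" using e True unfolding P_def Q_def by simp
    moreover have "L1 = [Z]@Q" using s True by simp
    ultimately show ?thesis by simp
  next
    case False
    have wp: "wf C (P@[Z]@Q)" using w s by simp
    have wp1: "wf C P" "lcod (last P) = ldom Z" using wf_app[OF False, of "[Z]@Q"] wp by auto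
    have cP: "Cmp C (evl C Z) (cmps C P) = cmps C P" unfolding ez using cmps_hom[OF wp1(1)] wp1(2) z Z_def
      by (metis id_l ldom.simps append.left_neutral append_Nil)
    show ?thesis
    proof (cases "Q = []")
      case True thus ?thesis using s e cP wp False unfolding P_def Q_def
        by (metis append_Nil2 cmps_app cmps_single list.distinct(1))
    next
      case Q: False
      have wzq: "wf C ([Z]@Q)" using wp wf_app[OF False, of "[Z]@Q"] by simp
      have wq2: "wf C Q" "lcod Z = ldom (hd Q)" using wf_app[of "[Z]" Q] wzq Q by auto
      have cQ: "Cmp C (cmps C Q) (evl C Z) = cmps C Q" unfolding ez using cmps_hom[OF wq2(1)] wq2(2) z Z_def
        by (metis id_r lcod.simps append.left_neutral append_Nil)
      have wpq: "wf C (P@Q)" using wf_app[OF False Q] wp1 wq2 wf_app[of "[Z]" Q] wzq Q z Z_def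
        by (simp add: wf_app[OF False Q])
      have "cmps C (P@[Z]@Q) = Cmp C (cmps C ([Z]@Q)) (cmps C P)" using cmps_app[OF wp False] by simp
      also have "\<dots> = Cmp C (cmps C Q) (cmps C P)" using cmps_app[OF wzq] Q cQ by simp
      also have "\<dots> = cmps C (P@Q)" using cmps_app[OF wpq False Q] by simp
      finally show ?thesis using s e unfolding P_def Q_def by simp
    qed
  qed
qed

end



locale WCP = SMC C for C :: "('o,'m) smcat" +
  fixes A V :: 'o and eta mu psi phi sigma :: 'm
  assumes oA: "A \<in> Obj C" and oV: "V \<in> Obj C"
  and heta: "eta \<in> Hom C (Unit C) A" and hmu: "mu \<in> Hom C (TO C A A) A"
  and hpsi: "psi \<in> Hom C (TO C V A) (TO C A V)" and hphi: "phi \<in> Hom C (TO C A V) (TO C V A)"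
  and hsig: "sigma \<in> Hom C (TO C V V) (TO C A V)"
  and massoc: "Cmp C mu (TM C mu (Id C A)) = Cmp C mu (TM C (Id C A) mu)"
  and unitL: "Cmp C mu (TM C eta (Id C A)) = Id C A"
  and unitR: "Cmp C mu (TM C (Id C A) eta) = Id C A"
  and psic: "psi_compat C A V mu psi"
  and phic: "Cmp C (TM C (Id C V) mu) (Cmp C (TM C phi (Id C A)) (TM C (Id C A) phi))
         = Cmp C phi (TM C mu (Id C V))"
  and inv1: "Cmp C psi phi = nablaAV C A V eta mu psi"
  and inv2: "Cmp C phi psi = nablaVA C A V eta mu phi"
  and nsig: "Cmp C (nablaAV C A V eta mu psi) sigma = sigma"
  and tw: "twistedAV C A V mu psi sigma"
  and cc: "cocycleAV C A V mu psi sigma"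
begin

abbreviation "Mu l r \<equiv> (l, mu, [A,A], [A], r)"
abbreviation "Et l r \<equiv> (l, eta, [], [A], r)"
abbreviation "Ps l r \<equiv> (l, psi, [V,A], [A,V], r)"
abbreviation "Ph l r \<equiv> (l, phi, [A,V], [V,A], r)"
abbreviation "Sg l r \<equiv> (l, sigma, [V,V], [A,V], r)"
abbreviation "Iv l r \<equiv> (l, Id C (Unit C), [], [], r)"

lemma arrs: "is_arr C eta" "is_arr C mu" "is_arr C psi" "is_arr C phi" "is_arr C sigma"
  using heta hmu hpsi hphi hsig by (auto intro: is_arrI)

lemmas wfs = heta hmu hpsi hphi hsig oA oV unit_obj id_hom
lemmas evs = cmps_def lay_def TM_unitL TM_unitR is_arr_TM is_arr_Id arrs oA oV unit_obj TO_obj TM_assoc_s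

lemma F_assoc: "cmps C [Mu [] [A], Mu [] []] = cmps C [Mu [A] [], Mu [] []]"
  using massoc by (simp add: evs)
lemma F_unitL: "cmps C [Et [] [A], Mu [] []] = cmps C [Iv [A] []]"
  using unitL by (simp add: evs)
lemma F_unitR: "cmps C [Et [A] [], Mu [] []] = cmps C [Iv [A] []]"
  using unitR by (simp add: evs)
lemma F_psic: "cmps C [Ps [] [A], Ps [A] [], Mu [] [V]] = cmps C [Mu [V] [], Ps [] []]"
  using psic by (simp add: evs psi_compat_def)
lemma F_phic: "cmps C [Ph [A] [], Ph [] [A], Mu [V] []] = cmps C [Mu [] [V], Ph [] []]"
  using phic by (simp add: evs)
lemma F_inv1: "cmps C [Ph [] [], Ps [] []] = cmps C [Et [A,V] [], Ps [A] [], Mu [] [V]]"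
  using inv1 by (simp add: evs nablaAV_def)
lemma F_tw: "cmps C [Sg [] [A], Ps [A] [], Mu [] [V]] = cmps C [Ps [V] [], Ps [] [V], Sg [A] [], Mu [] [V]]"
  using tw by (simp add: evs twistedAV_def)
lemma F_cc: "cmps C [Sg [] [V], Sg [A] [], Mu [] [V]] = cmps C [Sg [V] [], Ps [] [V], Sg [A] [], Mu [] [V]]"
  using cc by (simp add: evs cocycleAV_def)


lemma TM_id_s: "a \<in> Obj C \<Longrightarrow> b \<in> Obj C \<Longrightarrow> TM C (Id C a) (Id C b) = Id C (TO C a b)"
  by (rule TM_id)

lemma nAV: "nablaAV C A V eta mu psi = cmps C [Et [A,V] [], Ps [A] [], Mu [] [V]]"
  by (simp add: evs nablaAV_def)

lemma nVA: "nablaVA C A V eta mu phi = cmps C [Et [] [V,A], Ph [] [A], Mu [V] []]"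
proof -
  have h: "TM C eta (Id C V) \<in> Hom C (obl C [V]) (obl C [A,V])"
    using TM_hom[OF heta id_hom[OF oV]] by (simp add: TO_unitL oV)
  have ha: "is_arr C (Cmp C phi (TM C eta (Id C V)))" using comp_hom[OF h[simplified] hphi] is_arrI by blast
  have "TM C (Cmp C phi (TM C eta (Id C V))) (Id C A) = lay C [] (Cmp C phi (TM C eta (Id C V))) [A]"
    by (simp add: evs ha)
  also have "\<dots> = Cmp C (lay C [] phi [A]) (lay C [] (TM C eta (Id C V)) [A])"
    by (rule lay_comp[OF h, where c="[V,A]"]) (simp_all add: hphi oA oV)
  finally show ?thesis by (simp add: evs nablaVA_def TM_id_s)
qed

lemma F_inv2: "cmps C [Ps [] [], Ph [] []] = cmps C [Et [] [V,A], Ph [] [A], Mu [V] []]"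
  using inv2 by (simp add: evs nVA)

lemma F_nsig: "cmps C [Sg [] [], Et [A,V] [], Ps [A] [], Mu [] [V]] = cmps C [Sg [] []]"
proof -
  have "cmps C ([Sg [] []] @ [Et [A,V] [], Ps [A] [], Mu [] [V]]) = Cmp C (nablaAV C A V eta mu psi) sigma"
    by (subst cmps_app) (simp_all add: wfs nAV evs)
  thus ?thesis using nsig by (simp add: evs)
qed

lemma E0': "cmps C [Ph [] [], Et [] [V,A], Ph [] [A], Mu [V] []] = cmps C [Ph [] []]"
proof -
  have "cmps C [Ph [] [], Et [] [V,A], Ph [] [A], Mu [V] []] = cmps C [Et [] [A,V], Ph [A] [], Ph [] [A], Mu [V] []]"
    by (rule swi[where i=0]) (simp_all add: wfs)
  also have "\<dots> = cmps C [Et [] [A,V], Mu [] [V], Ph [] []]"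
    by (rule rwi[where i=1 and p="[]" and s="[]", OF F_phic]) (simp_all add: wfs)
  also have "\<dots> = cmps C [Iv [A] [V], Ph [] []]"
    by (rule rwi[where i=0 and p="[]" and s="[V]", OF F_unitL]) (simp_all add: wfs)
  also have "\<dots> = cmps C [Ph [] []]"
    by (rule rmI[where i=0]) (simp_all add: wfs)
  finally show ?thesis .
qed

lemma E1:
  "cmps C [Et [A] [V,A], Ph [A] [A], Mu [A,V] [], Ph [] [A], Mu [V] []] = cmps C [Ph [] [A], Mu [V] []]"
proof -
  have "cmps C [Et [A] [V,A], Ph [A] [A], Mu [A,V] [], Ph [] [A], Mu [V] []] = cmps C [Et [A] [V,A], Ph [A] [A], Ph [] [A,A], Mu [V,A] [], Mu [V] []]"
    by (rule swi[where i=2]) (simp_all add: wfs)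
  also have "\<dots> = cmps C [Et [A] [V,A], Ph [A] [A], Ph [] [A,A], Mu [V] [A], Mu [V] []]"
    by (rule rwi[where i=3 and p="[V]" and s="[]", OF F_assoc[symmetric]]) (simp_all add: wfs)
  also have "\<dots> = cmps C [Et [A] [V,A], Mu [] [V,A], Ph [] [A], Mu [V] []]"
    by (rule rwi[where i=1 and p="[]" and s="[A]", OF F_phic]) (simp_all add: wfs)
  also have "\<dots> = cmps C [Iv [A] [V,A], Ph [] [A], Mu [V] []]"
    by (rule rwi[where i=0 and p="[]" and s="[V,A]", OF F_unitR]) (simp_all add: wfs)
  also have "\<dots> = cmps C [Ph [] [A], Mu [V] []]"
    by (rule rmI[where i=0]) (simp_all add: wfs)
  finally show ?thesis .
qed

lemma L1:
  "cmps C [Ph [] [A], Mu [V] []] = cmps C [Ps [A] [], Mu [] [V], Ph [] []]"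
proof -
  have "cmps C [Ph [] [A], Mu [V] []] = cmps C [Et [A] [V,A], Ph [A] [A], Mu [A,V] [], Ph [] [A], Mu [V] []]"
    by (rule rwi[where i=0 and p="[]" and s="[]", OF E1[symmetric]]) (simp_all add: wfs)
  also have "\<dots> = cmps C [Ps [A] [], Ph [A] [], Ph [] [A], Mu [V] []]"
    by (rule rwi[where i=0 and p="[A]" and s="[]", OF F_inv2[symmetric]]) (simp_all add: wfs)
  also have "\<dots> = cmps C [Ps [A] [], Mu [] [V], Ph [] []]"
    by (rule rwi[where i=1 and p="[]" and s="[]", OF F_phic]) (simp_all add: wfs)
  finally show ?thesis .
qed

lemma E2:
  "cmps C [Et [] [V], Et [A,V] [], Ps [A] [], Mu [] [V]] = cmps C [Et [V] [], Ps [] []]"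
proof -
  have "cmps C [Et [] [V], Et [A,V] [], Ps [A] [], Mu [] [V]] = cmps C [Et [V] [], Et [] [V,A], Ps [A] [], Mu [] [V]]"
    by (rule swi[where i=0]) (simp_all add: wfs)
  also have "\<dots> = cmps C [Et [V] [], Ps [] [], Et [] [A,V], Mu [] [V]]"
    by (rule swi[where i=1]) (simp_all add: wfs)
  also have "\<dots> = cmps C [Et [V] [], Ps [] [], Iv [A] [V]]"
    by (rule rwi[where i=2 and p="[]" and s="[V]", OF F_unitL]) (simp_all add: wfs)
  also have "\<dots> = cmps C [Et [V] [], Ps [] []]"
    by (rule rmI[where i=2]) (simp_all add: wfs)
  finally show ?thesis .
qed

lemma L2:
  "cmps C [Et [V,A,V] [], Ps [V,A] [], Mu [V] [V], Ps [] [V], Sg [A] [], Mu [] [V]] = cmps C [Ps [] [V], Sg [A] [], Mu [] [V]]"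
proof -
  have "cmps C [Et [V,A,V] [], Ps [V,A] [], Mu [V] [V], Ps [] [V], Sg [A] [], Mu [] [V]] = cmps C [Et [V,A,V] [], Ps [V,A] [], Ps [] [A,V], Ps [A] [V], Mu [] [V,V], Sg [A] [], Mu [] [V]]"
    by (rule rwi[where i=2 and p="[]" and s="[V]", OF F_psic[symmetric]]) (simp_all add: wfs)
  also have "\<dots> = cmps C [Et [V,A,V] [], Ps [V,A] [], Ps [] [A,V], Ps [A] [V], Sg [A,A] [], Mu [] [A,V], Mu [] [V]]"
    by (rule swi[where i=4]) (simp_all add: wfs)
  also have "\<dots> = cmps C [Et [V,A,V] [], Ps [V,A] [], Ps [] [A,V], Ps [A] [V], Sg [A,A] [], Mu [A] [V], Mu [] [V]]"
    by (rule rwi[where i=5 and p="[]" and s="[V]", OF F_assoc]) (simp_all add: wfs)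
  also have "\<dots> = cmps C [Et [V,A,V] [], Ps [] [V,A], Ps [A,V] [], Ps [A] [V], Sg [A,A] [], Mu [A] [V], Mu [] [V]]"
    by (rule swi[where i=1]) (simp_all add: wfs)
  also have "\<dots> = cmps C [Et [V,A,V] [], Ps [] [V,A], Sg [A] [A], Ps [A,A] [], Mu [A] [V], Mu [] [V]]"
    by (rule rwi[where i=2 and p="[A]" and s="[]", OF F_tw[symmetric]]) (simp_all add: wfs)
  also have "\<dots> = cmps C [Ps [] [V], Et [A,V,V] [], Sg [A] [A], Ps [A,A] [], Mu [A] [V], Mu [] [V]]"
    by (rule swi[where i=0]) (simp_all add: wfs)
  also have "\<dots> = cmps C [Ps [] [V], Sg [A] [], Et [A,A,V] [], Ps [A,A] [], Mu [A] [V], Mu [] [V]]"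
    by (rule swi[where i=1]) (simp_all add: wfs)
  also have "\<dots> = cmps C [Ps [] [V], Sg [A] [], Mu [] [V]]"
    by (rule rwi[where i=1 and p="[A]" and s="[]", OF F_nsig]) (simp_all add: wfs)
  finally show ?thesis .
qed

lemma L3:
  "cmps C [Sg [] []] = cmps C [Et [V] [V], Ps [] [V], Sg [A] [], Mu [] [V]]"
proof -
  have "cmps C [Sg [] []] = cmps C [Sg [] [], Et [A,V] [], Ps [A] [], Mu [] [V]]"
    by (rule rwi[where i=0 and p="[]" and s="[]", OF F_nsig[symmetric]]) (simp_all add: wfs)
  also have "\<dots> = cmps C [Et [V,V] [], Sg [] [A], Ps [A] [], Mu [] [V]]"
    by (rule swi[where i=0]) (simp_all add: wfs)
  also have "\<dots> = cmps C [Et [V,V] [], Ps [V] [], Ps [] [V], Sg [A] [], Mu [] [V]]"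
    by (rule rwi[where i=1 and p="[]" and s="[]", OF F_tw]) (simp_all add: wfs)
  also have "\<dots> = cmps C [Et [V] [V], Et [V,A,V] [], Ps [V,A] [], Mu [V] [V], Ps [] [V], Sg [A] [], Mu [] [V]]"
    by (rule rwi[where i=0 and p="[V]" and s="[]", OF E2[symmetric]]) (simp_all add: wfs)
  also have "\<dots> = cmps C [Et [V] [V], Ps [] [V], Sg [A] [], Mu [] [V]]"
    by (rule rwi[where i=1 and p="[]" and s="[]", OF L2]) (simp_all add: wfs)
  finally show ?thesis .
qed

lemma L4:
  "cmps C [Et [A,V] [V], Ps [A] [V], Mu [] [V,V], Sg [A] [], Mu [] [V]] = cmps C [Sg [A] [], Mu [] [V]]"
proof -
  have "cmps C [Et [A,V] [V], Ps [A] [V], Mu [] [V,V], Sg [A] [], Mu [] [V]] = cmps C [Et [A,V] [V], Ps [A] [V], Sg [A,A] [], Mu [] [A,V], Mu [] [V]]"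
    by (rule swi[where i=2]) (simp_all add: wfs)
  also have "\<dots> = cmps C [Et [A,V] [V], Ps [A] [V], Sg [A,A] [], Mu [A] [V], Mu [] [V]]"
    by (rule rwi[where i=3 and p="[]" and s="[V]", OF F_assoc]) (simp_all add: wfs)
  also have "\<dots> = cmps C [Sg [A] [], Mu [] [V]]"
    by (rule rwi[where i=0 and p="[A]" and s="[]", OF L3[symmetric]]) (simp_all add: wfs)
  finally show ?thesis .
qed

lemma K2:
  "cmps C [Ph [V] [], Sg [] [A], Ps [A] [], Mu [] [V]] = cmps C [Ps [] [V], Sg [A] [], Mu [] [V]]"
proof -
  have "cmps C [Ph [V] [], Sg [] [A], Ps [A] [], Mu [] [V]] = cmps C [Ph [V] [], Ps [V] [], Ps [] [V], Sg [A] [], Mu [] [V]]"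
    by (rule rwi[where i=1 and p="[]" and s="[]", OF F_tw]) (simp_all add: wfs)
  also have "\<dots> = cmps C [Et [V,A,V] [], Ps [V,A] [], Mu [V] [V], Ps [] [V], Sg [A] [], Mu [] [V]]"
    by (rule rwi[where i=0 and p="[V]" and s="[]", OF F_inv1]) (simp_all add: wfs)
  also have "\<dots> = cmps C [Ps [] [V], Sg [A] [], Mu [] [V]]"
    by (rule rwi[where i=0 and p="[]" and s="[]", OF L2]) (simp_all add: wfs)
  finally show ?thesis .
qed

lemma K:
  "cmps C [Ph [] [V], Ph [V] [], Sg [] [A], Ps [A] [], Mu [] [V]] = cmps C [Sg [A] [], Mu [] [V]]"
proof -
  have "cmps C [Ph [] [V], Ph [V] [], Sg [] [A], Ps [A] [], Mu [] [V]] = cmps C [Ph [] [V], Ps [] [V], Sg [A] [], Mu [] [V]]"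
    by (rule rwi[where i=1 and p="[]" and s="[]", OF K2]) (simp_all add: wfs)
  also have "\<dots> = cmps C [Et [A,V] [V], Ps [A] [V], Mu [] [V,V], Sg [A] [], Mu [] [V]]"
    by (rule rwi[where i=0 and p="[]" and s="[V]", OF F_inv1]) (simp_all add: wfs)
  also have "\<dots> = cmps C [Sg [A] [], Mu [] [V]]"
    by (rule rwi[where i=0 and p="[]" and s="[]", OF L4]) (simp_all add: wfs)
  finally show ?thesis .
qed

lemma E3:
  "cmps C [Et [A,V] [], Ps [A] [], Mu [] [V], Ph [] []] = cmps C [Ph [] []]"
proof -
  have "cmps C [Et [A,V] [], Ps [A] [], Mu [] [V], Ph [] []] = cmps C [Ph [] [], Ps [] [], Ph [] []]"
    by (rule rwi[where i=0 and p="[]" and s="[]", OF F_inv1[symmetric]]) (simp_all add: wfs)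
  also have "\<dots> = cmps C [Ph [] [], Et [] [V,A], Ph [] [A], Mu [V] []]"
    by (rule rwi[where i=1 and p="[]" and s="[]", OF F_inv2]) (simp_all add: wfs)
  also have "\<dots> = cmps C [Ph [] []]"
    by (rule rwi[where i=0 and p="[]" and s="[]", OF E0']) (simp_all add: wfs)
  finally show ?thesis .
qed

lemma G1L:
  "cmps C [Sg [] [], Ph [] [], Et [] [V,A], Ph [] [A], Mu [V] []] = cmps C [Sg [] [], Ph [] []]"
proof -
  show "cmps C [Sg [] [], Ph [] [], Et [] [V,A], Ph [] [A], Mu [V] []] = cmps C [Sg [] [], Ph [] []]"
    by (rule rwi[where i=1 and p="[]" and s="[]", OF E0']) (simp_all add: wfs)
qed

lemma G2a:
  "cmps C [Ph [] [V], Ph [V] [], Sg [] [A], Ph [] [A], Mu [V] []] = cmps C [Sg [A] [], Mu [] [V], Ph [] []]"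
proof -
  have "cmps C [Ph [] [V], Ph [V] [], Sg [] [A], Ph [] [A], Mu [V] []] = cmps C [Ph [] [V], Ph [V] [], Sg [] [A], Ps [A] [], Mu [] [V], Ph [] []]"
    by (rule rwi[where i=3 and p="[]" and s="[]", OF L1]) (simp_all add: wfs)
  also have "\<dots> = cmps C [Sg [A] [], Mu [] [V], Ph [] []]"
    by (rule rwi[where i=0 and p="[]" and s="[]", OF K]) (simp_all add: wfs)
  finally show ?thesis .
qed

lemma G2b:
  "cmps C [Sg [A] [], Ph [A] [], Ph [] [A], Mu [V] []] = cmps C [Sg [A] [], Mu [] [V], Ph [] []]"
proof -
  show "cmps C [Sg [A] [], Ph [A] [], Ph [] [A], Mu [V] []] = cmps C [Sg [A] [], Mu [] [V], Ph [] []]"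
    by (rule rwi[where i=1 and p="[]" and s="[]", OF F_phic]) (simp_all add: wfs)
qed

lemma G3a:
  "cmps C [Sg [V] [], Ph [V] [], Sg [] [A], Ph [] [A], Mu [V] []] = cmps C [Sg [] [V], Sg [A] [], Mu [] [V], Ph [] []]"
proof -
  have "cmps C [Sg [V] [], Ph [V] [], Sg [] [A], Ph [] [A], Mu [V] []] = cmps C [Sg [V] [], Ph [V] [], Sg [] [A], Ps [A] [], Mu [] [V], Ph [] []]"
    by (rule rwi[where i=3 and p="[]" and s="[]", OF L1]) (simp_all add: wfs)
  also have "\<dots> = cmps C [Sg [V] [], Ps [] [V], Sg [A] [], Mu [] [V], Ph [] []]"
    by (rule rwi[where i=1 and p="[]" and s="[]", OF K2]) (simp_all add: wfs)
  also have "\<dots> = cmps C [Sg [] [V], Sg [A] [], Mu [] [V], Ph [] []]"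
    by (rule rwi[where i=0 and p="[]" and s="[]", OF F_cc[symmetric]]) (simp_all add: wfs)
  finally show ?thesis .
qed

lemma G3b:
  "cmps C [Sg [] [V], Ph [] [V], Ph [V] [], Sg [] [A], Ph [] [A], Mu [V] []] = cmps C [Sg [] [V], Sg [A] [], Mu [] [V], Ph [] []]"
proof -
  have "cmps C [Sg [] [V], Ph [] [V], Ph [V] [], Sg [] [A], Ph [] [A], Mu [V] []] = cmps C [Sg [] [V], Ph [] [V], Ph [V] [], Sg [] [A], Ps [A] [], Mu [] [V], Ph [] []]"
    by (rule rwi[where i=4 and p="[]" and s="[]", OF L1]) (simp_all add: wfs)
  also have "\<dots> = cmps C [Sg [] [V], Sg [A] [], Mu [] [V], Ph [] []]"
    by (rule rwi[where i=1 and p="[]" and s="[]", OF K]) (simp_all add: wfs)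
  finally show ?thesis .
qed

lemma G4a:
  "cmps C [Ph [V] [A], Sg [] [A,A], Ph [] [A,A], Mu [V,A] [], Mu [V] []] = cmps C [Ps [] [V,A], Sg [A] [A], Ps [A,A] [], Mu [A] [V], Mu [] [V], Ph [] []]"
proof -
  have "cmps C [Ph [V] [A], Sg [] [A,A], Ph [] [A,A], Mu [V,A] [], Mu [V] []] = cmps C [Ph [V] [A], Sg [] [A,A], Ph [] [A,A], Mu [V] [A], Mu [V] []]"
    by (rule rwi[where i=3 and p="[V]" and s="[]", OF F_assoc[symmetric]]) (simp_all add: wfs)
  also have "\<dots> = cmps C [Ph [V] [A], Sg [] [A,A], Ps [A] [A], Mu [] [V,A], Ph [] [A], Mu [V] []]"
    by (rule rwi[where i=2 and p="[]" and s="[A]", OF L1]) (simp_all add: wfs)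
  also have "\<dots> = cmps C [Ph [V] [A], Sg [] [A,A], Ps [A] [A], Mu [] [V,A], Ps [A] [], Mu [] [V], Ph [] []]"
    by (rule rwi[where i=4 and p="[]" and s="[]", OF L1]) (simp_all add: wfs)
  also have "\<dots> = cmps C [Ps [] [V,A], Sg [A] [A], Mu [] [V,A], Ps [A] [], Mu [] [V], Ph [] []]"
    by (rule rwi[where i=0 and p="[]" and s="[A]", OF K2]) (simp_all add: wfs)
  also have "\<dots> = cmps C [Ps [] [V,A], Sg [A] [A], Ps [A,A] [], Mu [] [A,V], Mu [] [V], Ph [] []]"
    by (rule swi[where i=2]) (simp_all add: wfs)
  also have "\<dots> = cmps C [Ps [] [V,A], Sg [A] [A], Ps [A,A] [], Mu [A] [V], Mu [] [V], Ph [] []]"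
    by (rule rwi[where i=3 and p="[]" and s="[V]", OF F_assoc]) (simp_all add: wfs)
  finally show ?thesis .
qed

lemma G4b:
  "cmps C [Ps [] [V,A], Ps [A,V] [], Ps [A] [V], Sg [A,A] [], Mu [] [A,V], Mu [] [V], Ph [] []] = cmps C [Ps [] [V,A], Sg [A] [A], Ps [A,A] [], Mu [A] [V], Mu [] [V], Ph [] []]"
proof -
  have "cmps C [Ps [] [V,A], Ps [A,V] [], Ps [A] [V], Sg [A,A] [], Mu [] [A,V], Mu [] [V], Ph [] []] = cmps C [Ps [] [V,A], Ps [A,V] [], Ps [A] [V], Sg [A,A] [], Mu [A] [V], Mu [] [V], Ph [] []]"
    by (rule rwi[where i=4 and p="[]" and s="[V]", OF F_assoc]) (simp_all add: wfs)
  also have "\<dots> = cmps C [Ps [] [V,A], Sg [A] [A], Ps [A,A] [], Mu [A] [V], Mu [] [V], Ph [] []]"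
    by (rule rwi[where i=1 and p="[A]" and s="[]", OF F_tw[symmetric]]) (simp_all add: wfs)
  finally show ?thesis .
qed

lemma QR:
  "cmps C [Et [V] [], Et [] [V,A], Ph [] [A], Mu [V] []] = cmps C [Et [] [V], Ph [] []]"
proof -
  have "cmps C [Et [V] [], Et [] [V,A], Ph [] [A], Mu [V] []] = cmps C [Et [] [V], Et [A,V] [], Ph [] [A], Mu [V] []]"
    by (rule swi[where i=0]) (simp_all add: wfs)
  also have "\<dots> = cmps C [Et [] [V], Ph [] [], Et [V,A] [], Mu [V] []]"
    by (rule swi[where i=1]) (simp_all add: wfs)
  also have "\<dots> = cmps C [Et [] [V], Ph [] [], Iv [V,A] []]"
    by (rule rwi[where i=2 and p="[V]" and s="[]", OF F_unitR]) (simp_all add: wfs)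
  also have "\<dots> = cmps C [Et [] [V], Ph [] []]"
    by (rule rmI[where i=2]) (simp_all add: wfs)
  finally show ?thesis .
qed



lemma hps: "Cmp C phi sigma \<in> Hom C (obl C [V,V]) (obl C [V,A])"
  using comp_hom[OF hsig hphi] by simp
lemma aps: "is_arr C (Cmp C phi sigma)" using hps by (rule is_arrI)

lemma csig: "set l \<subseteq> Obj C \<Longrightarrow> set r \<subseteq> Obj C \<Longrightarrow> cmps C [Sg l r, Ph l r] = lay C l (Cmp C phi sigma) r"
  by (simp add: cmps_def) (rule lay_comp[where a="[V,V]" and b="[A,V]" and c="[V,A]", symmetric], simp_all add: hsig hphi)

lemma cs1: "cmps C [Sg [] [A], Ph [] [A]] = TM C (Cmp C phi sigma) (Id C A)"
  using csig[of "[]" "[A]"] by (simp add: oA lay_def TM_unitL aps)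
lemma cs2: "cmps C [Sg [] [V], Ph [] [V]] = TM C (Cmp C phi sigma) (Id C V)"
  using csig[of "[]" "[V]"] by (simp add: oV lay_def TM_unitL aps)
lemma cs3: "cmps C [Sg [V] [], Ph [V] []] = TM C (Id C V) (Cmp C phi sigma)"
  using csig[of "[V]" "[]"] by (simp add: oV lay_def TM_unitR aps is_arr_TM is_arr_Id)
lemma cs4: "cmps C [Sg [A] [], Ph [A] []] = TM C (Id C A) (Cmp C phi sigma)"
  using csig[of "[A]" "[]"] by (simp add: oA lay_def TM_unitR aps is_arr_TM is_arr_Id)
lemma cs5: "cmps C [Sg [] [A,A], Ph [] [A,A]] = TM C (Cmp C phi sigma) (Id C (TO C A A))"
  using csig[of "[]" "[A,A]"] by (simp add: oA lay_def TM_unitL aps)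

lemma tmsm: "TM C (Cmp C phi sigma) mu = Cmp C (TM C (Id C (TO C V A)) mu) (TM C (Cmp C phi sigma) (Id C (TO C A A)))"
  using interch_id1[OF hps, of mu] hmu by simp
lemma tmps: "TM C psi psi = Cmp C (TM C (Id C (TO C A V)) psi) (TM C psi (Id C (TO C V A)))"
  using interch_id1[OF hpsi hpsi] by simp
lemma tmms: "TM C mu sigma = Cmp C (TM C mu (Id C (TO C A V))) (TM C (Id C (TO C A A)) sigma)"
  using interch_id2[OF hmu hsig] by simp

lemma G1: "Cmp C (nablaVA C A V eta mu phi) (Cmp C phi sigma) = Cmp C phi sigma"
proof -
  have "cmps C ([Sg [] [], Ph [] []] @ [Et [] [V,A], Ph [] [A], Mu [V] []]) = Cmp C (nablaVA C A V eta mu phi) (Cmp C phi sigma)"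
    by (subst cmps_app) (simp_all add: wfs evs nVA)
  moreover have "cmps C [Sg [] [], Ph [] []] = Cmp C phi sigma" by (simp add: evs)
  ultimately show ?thesis using G1L by simp
qed

lemma G2: "Cmp C (TM C (Id C V) mu) (Cmp C (TM C (Cmp C phi sigma) (Id C A)) (Cmp C (TM C (Id C V) phi) (TM C phi (Id C V))))
  = Cmp C (TM C (Id C V) mu) (Cmp C (TM C phi (Id C A)) (TM C (Id C A) (Cmp C phi sigma)))"
proof -
  have a: "cmps C (([Ph [] [V], Ph [V] []] @ [Sg [] [A], Ph [] [A]]) @ [Mu [V] []]) =
     Cmp C (TM C (Id C V) mu) (Cmp C (TM C (Cmp C phi sigma) (Id C A)) (Cmp C (TM C (Id C V) phi) (TM C phi (Id C V))))"
    apply (subst cmps_app)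
    prefer 4
    apply (subst cmps_app)
    prefer 4
    apply (simp only: cs1)
    apply (simp_all add: wfs evs aps)
    done
  have b: "cmps C (([Sg [A] [], Ph [A] []] @ [Ph [] [A]]) @ [Mu [V] []]) =
     Cmp C (TM C (Id C V) mu) (Cmp C (TM C phi (Id C A)) (TM C (Id C A) (Cmp C phi sigma)))"
    apply (subst cmps_app)
    prefer 4
    apply (subst cmps_app)
    prefer 4
    apply (simp only: cs4)
    apply (simp_all add: wfs evs aps)
    done
  show ?thesis using a b G2a G2b by simp
qed

lemma G3: "Cmp C (TM C (Id C V) mu) (Cmp C (TM C (Cmp C phi sigma) (Id C A)) (TM C (Id C V) (Cmp C phi sigma)))
  = Cmp C (TM C (Id C V) mu) (Cmp C (TM C (Cmp C phi sigma) (Id C A))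
      (Cmp C (TM C (Id C V) phi) (TM C (Cmp C phi sigma) (Id C V))))"
proof -
  have a: "cmps C (([Sg [V] [], Ph [V] []] @ [Sg [] [A], Ph [] [A]]) @ [Mu [V] []]) =
     Cmp C (TM C (Id C V) mu) (Cmp C (TM C (Cmp C phi sigma) (Id C A)) (TM C (Id C V) (Cmp C phi sigma)))"
    apply (subst cmps_app)
    prefer 4
    apply (subst cmps_app)
    prefer 4
    apply (simp only: cs1 cs3)
    apply (simp_all add: wfs evs aps)
    done
  have b: "cmps C ((([Sg [] [V], Ph [] [V]] @ [Ph [V] []]) @ [Sg [] [A], Ph [] [A]]) @ [Mu [V] []]) =
     Cmp C (TM C (Id C V) mu) (Cmp C (TM C (Cmp C phi sigma) (Id C A))
      (Cmp C (TM C (Id C V) phi) (TM C (Cmp C phi sigma) (Id C V))))"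
    apply (subst cmps_app)
    prefer 4
    apply (subst cmps_app)
    prefer 4
    apply (subst cmps_app)
    prefer 4
    apply (simp only: cs1 cs2)
    apply (simp_all add: wfs evs aps)
    done
  show ?thesis using a b G3a G3b by simp
qed

lemma G4: "muVA C A V mu phi (Cmp C phi sigma) = Cmp C phi (Cmp C (muAV C A V mu psi sigma) (TM C psi psi))"
proof -
  have a: "cmps C (([Ph [V] [A]] @ ([Sg [] [A,A], Ph [] [A,A]] @ [Mu [V,A] []])) @ [Mu [V] []]) =
     muVA C A V mu phi (Cmp C phi sigma)"
    unfolding muVA_def tmsm
    apply (subst cmps_app)
    prefer 4
    apply (subst cmps_app)
    prefer 4
    apply (subst cmps_app)
    prefer 4
    apply (simp only: cs5)
    apply (simp_all add: wfs evs aps)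
    done
  have b: "cmps C (([Ps [] [V,A], Ps [A,V] []] @ (([Ps [A] [V]] @ [Sg [A,A] [], Mu [] [A,V]]) @ [Mu [] [V]])) @ [Ph [] []]) =
     Cmp C phi (Cmp C (muAV C A V mu psi sigma) (TM C psi psi))"
    unfolding muAV_def tmms tmps
    apply (subst cmps_app)
    prefer 4
    apply (subst cmps_app)
    prefer 4
    apply (subst cmps_app)
    prefer 4
    apply (subst cmps_app)
    prefer 4
    apply (simp_all add: wfs evs aps)
    done
  show ?thesis using a b G4a G4b by simp
qed

abbreviation "Nu n l r \<equiv> (l, n, [], [A,V], r)"

context
  fixes nu
  assumes hnu: "nu \<in> Hom C (Unit C) (TO C A V)"
  and p1: "Cmp C (TM C mu (Id C V)) (Cmp C (TM C (Id C A) sigma) (Cmp C (TM C psi (Id C V)) (TM C (Id C V) nu)))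
       = Cmp C (nablaAV C A V eta mu psi) (TM C eta (Id C V))"
  and p2: "Cmp C (TM C mu (Id C V)) (Cmp C (TM C (Id C A) sigma) (TM C nu (Id C V)))
       = Cmp C (nablaAV C A V eta mu psi) (TM C eta (Id C V))"
  and p3: "Cmp C (TM C mu (Id C V)) (Cmp C (TM C (Id C A) psi) (TM C nu (Id C A)))
       = betaAV C A V mu nu"
begin

lemma anu: "is_arr C nu" using hnu by (rule is_arrI)

lemma nE: "Cmp C (nablaAV C A V eta mu psi) (TM C eta (Id C V)) = cmps C [Et [] [V], Et [A,V] [], Ps [A] [], Mu [] [V]]"
proof -
  have "cmps C ([Et [] [V]] @ [Et [A,V] [], Ps [A] [], Mu [] [V]]) = Cmp C (nablaAV C A V eta mu psi) (TM C eta (Id C V))"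
    by (subst cmps_app) (simp_all add: wfs evs nAV)
  thus ?thesis by simp
qed

lemma F_P1: "cmps C [Nu nu [V] [], Ps [] [V], Sg [A] [], Mu [] [V]] = cmps C [Et [] [V], Et [A,V] [], Ps [A] [], Mu [] [V]]"
  using p1 unfolding nE by (simp add: evs anu)
lemma F_P2: "cmps C [Nu nu [] [V], Sg [A] [], Mu [] [V]] = cmps C [Et [] [V], Et [A,V] [], Ps [A] [], Mu [] [V]]"
  using p2 unfolding nE by (simp add: evs anu)
lemma F_P3: "cmps C [Nu nu [] [A], Ps [A] [], Mu [] [V]] = cmps C [Nu nu [A] [], Mu [] [V]]"
  using p3 by (simp add: evs anu betaAV_def)

lemma Q1a:
  "cmps C [Nu nu [] [V], Ph [] [V], Ph [V] [], Sg [] [A], Ph [] [A], Mu [V] []] = cmps C [Et [] [V], Ph [] []]"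
proof -
  have "cmps C [Nu nu [] [V], Ph [] [V], Ph [V] [], Sg [] [A], Ph [] [A], Mu [V] []] = cmps C [Nu nu [] [V], Ph [] [V], Ph [V] [], Sg [] [A], Ps [A] [], Mu [] [V], Ph [] []]"
    by (rule rwi[where i=4 and p="[]" and s="[]", OF L1]) (simp_all add: wfs hnu)
  also have "\<dots> = cmps C [Nu nu [] [V], Sg [A] [], Mu [] [V], Ph [] []]"
    by (rule rwi[where i=1 and p="[]" and s="[]", OF K]) (simp_all add: wfs hnu)
  also have "\<dots> = cmps C [Et [] [V], Et [A,V] [], Ps [A] [], Mu [] [V], Ph [] []]"
    by (rule rwi[where i=0 and p="[]" and s="[]", OF F_P2]) (simp_all add: wfs hnu)
  also have "\<dots> = cmps C [Et [] [V], Ph [] []]"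
    by (rule rwi[where i=1 and p="[]" and s="[]", OF E3]) (simp_all add: wfs hnu)
  finally show ?thesis .
qed

lemma Q2a:
  "cmps C [Nu nu [V] [], Ph [V] [], Sg [] [A], Ph [] [A], Mu [V] []] = cmps C [Et [] [V], Ph [] []]"
proof -
  have "cmps C [Nu nu [V] [], Ph [V] [], Sg [] [A], Ph [] [A], Mu [V] []] = cmps C [Nu nu [V] [], Ph [V] [], Sg [] [A], Ps [A] [], Mu [] [V], Ph [] []]"
    by (rule rwi[where i=3 and p="[]" and s="[]", OF L1]) (simp_all add: wfs hnu)
  also have "\<dots> = cmps C [Nu nu [V] [], Ps [] [V], Sg [A] [], Mu [] [V], Ph [] []]"
    by (rule rwi[where i=1 and p="[]" and s="[]", OF K2]) (simp_all add: wfs hnu)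
  also have "\<dots> = cmps C [Et [] [V], Et [A,V] [], Ps [A] [], Mu [] [V], Ph [] []]"
    by (rule rwi[where i=0 and p="[]" and s="[]", OF F_P1]) (simp_all add: wfs hnu)
  also have "\<dots> = cmps C [Et [] [V], Ph [] []]"
    by (rule rwi[where i=1 and p="[]" and s="[]", OF E3]) (simp_all add: wfs hnu)
  finally show ?thesis .
qed

lemma Q3a:
  "cmps C [Nu nu [A] [], Ph [A] [], Ph [] [A], Mu [V] []] = cmps C [Nu nu [] [A], Ps [A] [], Mu [] [V], Ph [] []]"
proof -
  have "cmps C [Nu nu [A] [], Ph [A] [], Ph [] [A], Mu [V] []] = cmps C [Nu nu [A] [], Mu [] [V], Ph [] []]"
    by (rule rwi[where i=1 and p="[]" and s="[]", OF F_phic]) (simp_all add: wfs hnu)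
  also have "\<dots> = cmps C [Nu nu [] [A], Ps [A] [], Mu [] [V], Ph [] []]"
    by (rule rwi[where i=0 and p="[]" and s="[]", OF F_P3[symmetric]]) (simp_all add: wfs hnu)
  finally show ?thesis .
qed

lemma Q3b:
  "cmps C [Nu nu [] [A], Ph [] [A], Mu [V] []] = cmps C [Nu nu [] [A], Ps [A] [], Mu [] [V], Ph [] []]"
proof -
  show "cmps C [Nu nu [] [A], Ph [] [A], Mu [V] []] = cmps C [Nu nu [] [A], Ps [A] [], Mu [] [V], Ph [] []]"
    by (rule rwi[where i=1 and p="[]" and s="[]", OF L1]) (simp_all add: wfs hnu)
qed



lemma cnu: "set l \<subseteq> Obj C \<Longrightarrow> set r \<subseteq> Obj C \<Longrightarrow> cmps C [Nu nu l r, Ph l r] = lay C l (Cmp C phi nu) r"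
  by (simp add: cmps_def) (rule lay_comp[where a="[]" and b="[A,V]" and c="[V,A]", symmetric], simp_all add: hnu hphi)
lemma apn: "is_arr C (Cmp C phi nu)" using comp_hom[OF hnu hphi] by (rule is_arrI)
lemma cn1: "cmps C [Nu nu [] [V], Ph [] [V]] = TM C (Cmp C phi nu) (Id C V)"
  using cnu[of "[]" "[V]"] by (simp add: oV lay_def TM_unitL apn)
lemma cn2: "cmps C [Nu nu [V] [], Ph [V] []] = TM C (Id C V) (Cmp C phi nu)"
  using cnu[of "[V]" "[]"] by (simp add: oV lay_def TM_unitR apn is_arr_TM is_arr_Id)
lemma cn3: "cmps C [Nu nu [A] [], Ph [A] []] = TM C (Id C A) (Cmp C phi nu)"
  using cnu[of "[A]" "[]"] by (simp add: oA lay_def TM_unitR apn is_arr_TM is_arr_Id)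
lemma cn4: "cmps C [Nu nu [] [A], Ph [] [A]] = TM C (Cmp C phi nu) (Id C A)"
  using cnu[of "[]" "[A]"] by (simp add: oA lay_def TM_unitL apn)

lemma nVE: "cmps C [Et [V] [], Et [] [V,A], Ph [] [A], Mu [V] []] = Cmp C (nablaVA C A V eta mu phi) (TM C (Id C V) eta)"
proof -
  have "cmps C ([Et [V] []] @ [Et [] [V,A], Ph [] [A], Mu [V] []]) = Cmp C (nablaVA C A V eta mu phi) (TM C (Id C V) eta)"
    by (subst cmps_app) (simp_all add: wfs evs nVA)
  thus ?thesis by simp
qed

lemma Q1: "Cmp C (TM C (Id C V) mu) (Cmp C (TM C (Cmp C phi sigma) (Id C A))
           (Cmp C (TM C (Id C V) phi) (TM C (Cmp C phi nu) (Id C V))))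
          = Cmp C (nablaVA C A V eta mu phi) (TM C (Id C V) eta)"
proof -
  have a: "cmps C ((([Nu nu [] [V], Ph [] [V]] @ [Ph [V] []]) @ [Sg [] [A], Ph [] [A]]) @ [Mu [V] []]) =
     Cmp C (TM C (Id C V) mu) (Cmp C (TM C (Cmp C phi sigma) (Id C A))
           (Cmp C (TM C (Id C V) phi) (TM C (Cmp C phi nu) (Id C V))))"
    apply (subst cmps_app)
    prefer 4
    apply (subst cmps_app)
    prefer 4
    apply (subst cmps_app)
    prefer 4
    apply (simp only: cs1 cn1)
    apply (simp_all add: wfs evs aps apn hnu)
    done
  show ?thesis using a Q1a QR nVE by simp
qed

lemma Q2: "Cmp C (TM C (Id C V) mu) (Cmp C (TM C (Cmp C phi sigma) (Id C A))
           (TM C (Id C V) (Cmp C phi nu)))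
          = Cmp C (nablaVA C A V eta mu phi) (TM C (Id C V) eta)"
proof -
  have a: "cmps C (([Nu nu [V] [], Ph [V] []] @ [Sg [] [A], Ph [] [A]]) @ [Mu [V] []]) =
     Cmp C (TM C (Id C V) mu) (Cmp C (TM C (Cmp C phi sigma) (Id C A))
           (TM C (Id C V) (Cmp C phi nu)))"
    apply (subst cmps_app)
    prefer 4
    apply (subst cmps_app)
    prefer 4
    apply (simp only: cs1 cn2)
    apply (simp_all add: wfs evs aps apn hnu)
    done
  show ?thesis using a Q2a QR nVE by simp
qed

lemma Q3: "Cmp C (TM C (Id C V) mu) (Cmp C (TM C phi (Id C A)) (TM C (Id C A) (Cmp C phi nu)))
          = Cmp C (TM C (Id C V) mu) (TM C (Cmp C phi nu) (Id C A))"
proof -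
  have a: "cmps C (([Nu nu [A] [], Ph [A] []] @ [Ph [] [A]]) @ [Mu [V] []]) =
     Cmp C (TM C (Id C V) mu) (Cmp C (TM C phi (Id C A)) (TM C (Id C A) (Cmp C phi nu)))"
    apply (subst cmps_app)
    prefer 4
    apply (subst cmps_app)
    prefer 4
    apply (simp only: cn3)
    apply (simp_all add: wfs evs aps apn hnu)
    done
  have b: "cmps C ([Nu nu [] [A], Ph [] [A]] @ [Mu [V] []]) =
     Cmp C (TM C (Id C V) mu) (TM C (Cmp C phi nu) (Id C A))"
    apply (subst cmps_app)
    prefer 4
    apply (simp only: cn4)
    apply (simp_all add: wfs evs aps apn hnu)
    done
  show ?thesis using a b Q3a Q3b by simp
qed
end

end

theorem proposition1p10:
  fixes C :: "('o, 'm) smcat"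
    and A V :: 'o and eta mu psiVA sigmaVA psiAV :: 'm
  assumes smc: "strict_monoidal_category C"
    and split: "idempotents_split C"
    and wcp: "weak_crossed_product C A V eta mu psiVA sigmaVA"
    and psiAV_hom: "psiAV \<in> Hom C (TO C A V) (TO C V A)"
    and psiAV_compat:
      "Cmp C (TM C (Id C V) mu) (Cmp C (TM C psiAV (Id C A)) (TM C (Id C A) psiAV))
         = Cmp C psiAV (TM C mu (Id C V))"
    and inv1: "Cmp C psiVA psiAV = nablaAV C A V eta mu psiVA"
    and inv2: "Cmp C psiAV psiVA = nablaVA C A V eta mu psiAV"
  shows
    "Cmp C (nablaVA C A V eta mu psiAV) (Cmp C psiAV sigmaVA) = Cmp C psiAV sigmaVA
     \<and>
     Cmp C (TM C (Id C V) mu) (Cmp C (TM C (Cmp C psiAV sigmaVA) (Id C A))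
        (Cmp C (TM C (Id C V) psiAV) (TM C psiAV (Id C V))))
       = Cmp C (TM C (Id C V) mu) (Cmp C (TM C psiAV (Id C A)) (TM C (Id C A) (Cmp C psiAV sigmaVA)))
     \<and>
     Cmp C (TM C (Id C V) mu) (Cmp C (TM C (Cmp C psiAV sigmaVA) (Id C A))
        (TM C (Id C V) (Cmp C psiAV sigmaVA)))
       = Cmp C (TM C (Id C V) mu) (Cmp C (TM C (Cmp C psiAV sigmaVA) (Id C A))
           (Cmp C (TM C (Id C V) psiAV) (TM C (Cmp C psiAV sigmaVA) (Id C V))))
     \<and>
     muVA C A V mu psiAV (Cmp C psiAV sigmaVA)
       = Cmp C psiAV (Cmp C (muAV C A V mu psiVA sigmaVA) (TM C psiVA psiVA))
     \<and>
     (\<forall>nu. wcp_preunit C A V eta mu psiVA sigmaVA nu \<longrightarrow>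
        Cmp C (TM C (Id C V) mu) (Cmp C (TM C (Cmp C psiAV sigmaVA) (Id C A))
           (Cmp C (TM C (Id C V) psiAV) (TM C (Cmp C psiAV nu) (Id C V))))
          = Cmp C (nablaVA C A V eta mu psiAV) (TM C (Id C V) eta)
        \<and>
        Cmp C (TM C (Id C V) mu) (Cmp C (TM C (Cmp C psiAV sigmaVA) (Id C A))
           (TM C (Id C V) (Cmp C psiAV nu)))
          = Cmp C (nablaVA C A V eta mu psiAV) (TM C (Id C V) eta)
        \<and>
        Cmp C (TM C (Id C V) mu) (Cmp C (TM C psiAV (Id C A)) (TM C (Id C A) (Cmp C psiAV nu)))
          = Cmp C (TM C (Id C V) mu) (TM C (Cmp C psiAV nu) (Id C A)))"
proof -
  have alg: "algebra C A eta mu" and oV: "V \<in> Obj C"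
    and hpsi: "psiVA \<in> Hom C (TO C V A) (TO C A V)"
    and hsig: "sigmaVA \<in> Hom C (TO C V V) (TO C A V)"
    and pc: "psi_compat C A V mu psiVA"
    and ns: "Cmp C (nablaAV C A V eta mu psiVA) sigmaVA = sigmaVA"
    and tw: "twistedAV C A V mu psiVA sigmaVA"
    and cc: "cocycleAV C A V mu psiVA sigmaVA"
    using wcp unfolding weak_crossed_product_def by auto
  interpret W: WCP C A V eta mu psiVA psiAV sigmaVA
    apply unfold_locales
    using smc alg oV hpsi hsig pc ns tw cc psiAV_hom psiAV_compat inv1 inv2
    unfolding algebra_def by auto
  show ?thesis
  proof (intro conjI allI impI)
    fix nu
    assume pu: "wcp_preunit C A V eta mu psiVA sigmaVA nu"
    have hnu: "nu \<in> Hom C (Unit C) (TO C A V)"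
      and p1: "Cmp C (TM C mu (Id C V)) (Cmp C (TM C (Id C A) sigmaVA) (Cmp C (TM C psiVA (Id C V)) (TM C (Id C V) nu)))
       = Cmp C (nablaAV C A V eta mu psiVA) (TM C eta (Id C V))"
      and p2: "Cmp C (TM C mu (Id C V)) (Cmp C (TM C (Id C A) sigmaVA) (TM C nu (Id C V)))
       = Cmp C (nablaAV C A V eta mu psiVA) (TM C eta (Id C V))"
      and p3: "Cmp C (TM C mu (Id C V)) (Cmp C (TM C (Id C A) psiVA) (TM C nu (Id C A)))
       = betaAV C A V mu nu"
      using pu unfolding wcp_preunit_def by auto
    show "Cmp C (TM C (Id C V) mu) (Cmp C (TM C (Cmp C psiAV sigmaVA) (Id C A))
           (Cmp C (TM C (Id C V) psiAV) (TM C (Cmp C psiAV nu) (Id C V))))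
          = Cmp C (nablaVA C A V eta mu psiAV) (TM C (Id C V) eta)"
      by (rule W.Q1[OF hnu p1 p2 p3])
    show "Cmp C (TM C (Id C V) mu) (Cmp C (TM C (Cmp C psiAV sigmaVA) (Id C A))
           (TM C (Id C V) (Cmp C psiAV nu)))
          = Cmp C (nablaVA C A V eta mu psiAV) (TM C (Id C V) eta)"
      by (rule W.Q2[OF hnu p1 p2 p3])
    show "Cmp C (TM C (Id C V) mu) (Cmp C (TM C psiAV (Id C A)) (TM C (Id C A) (Cmp C psiAV nu)))
          = Cmp C (TM C (Id C V) mu) (TM C (Cmp C psiAV nu) (Id C A))"
      by (rule W.Q3[OF hnu p1 p2 p3])
  qed (rule W.G1, rule W.G2, rule W.G3, rule W.G4)
qed

end
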